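(* Consider $\min_{\beta\in\mathbb{R}^p} f(\beta)+\sum_{j=1}^p g_j(\beta_j)$ under the following hypotheses: $f$ is convex, differentiable, with $|\nabla_j f(x+he_j)-\nabla_j f(x)|\le L_j|h|$ ($L_j>0$); each $g_j$ is proper, closed, lower bounded and $g_j/L_j+\frac{\alpha}{2}(\cdot)^2$ is convex for some $\alpha<1$; cyclic proximal coordinate descent converges to a critical point $\hat\beta$; with $\mathcal{S}=\mathrm{gsupp}(\hat\beta)=\{j_1,\dots,j_{|\mathcal{S}|}\}$, $-\nabla_j f(\hat\beta)\in\mathrm{interior}(\partial g_j(\hat\beta_j))$ for $j\notin\mathcal{S}$, $f$ is $\mathcal{C}^3$ near $\hat\beta$, $g_j$ is $\mathcal{C}^3$ near $\hat\beta_j$ for $j\in\mathcal{S}$, and $M:=\nabla^2_{\mathcal{S},\mathcal{S}}f(\hat\beta)+\nabla^2_{\mathcal{S},\mathcal{S}}g(\hat\beta)\succ0$. Let $\gamma_j=1/L_j$ and let $\psi=\mathcal{P}^{(|\mathcal{S}|)}\circ\cdots\circ\mathcal{P}^{(1)}:\mathbb{R}^{|\mathcal{S}|}\to\mathbb{R}^{|\mathcal{S}|}$ be as defined in the context. Then $\psi$ is twice differentiable at $\hat\beta_{\mathcal{S}}$ with Jacobian $\mathcal{J}\psi(\hat\beta_{\mathcal{S}})=M^{-1/2}(\mathrm{Id}-B^{(|\mathcal{S}|)})\cdots(\mathrm{Id}-B^{(1)})M^{1/2}$, where for $s\in[|\mathcal{S}|]$, $B^{(s)}=M^{1/2}_{:s}\,\frac{\gamma_{j_s}}{1+\gamma_{j_s}g_{j_s}''(\hat\beta_{j_s})}\,(M^{1/2}_{:s})^\top\in\mathbb{R}^{|\mathcal{S}|\times|\mathcal{S}|}$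 and $M^{1/2}_{:s}$ is the $s$-th column of $M^{1/2}$.
   Context: $\partial$ is the Fréchet subdifferential, critical point means $-\nabla f(x)\in\partial g(x)$ with $g(\beta)=\sum_jg_j(\beta_j)$, and $\mathrm{gsupp}(\beta)=\{j:\partial g_j(\beta_j)\text{ is a singleton}\}$. $\nabla^2_{\mathcal{S},\mathcal{S}}g(\hat\beta)=\mathrm{diag}(g_j''(\hat\beta_j))_{j\in\mathcal{S}}$. Cyclic proximal coordinate descent updates, for $j=1,\dots,p$ in turn, $\beta_j\leftarrow\mathrm{prox}_{g_j/L_j}(\beta_j-\nabla_jf(\beta)/L_j)$, with $\mathrm{prox}_h(z)=\arg\min_u\frac12(u-z)^2+h(u)$. Define $\pi:\mathbb{R}^{|\mathcal{S}|}\to\mathbb{R}^p$ by $\pi(u)_{j_s}=u_s$ and $\pi(u)_j=\hat\beta_j$ for $j\notin\mathcal{S}$. For $s\in[|\mathcal{S}|]$, $\mathcal{P}^{(s)}:\mathbb{R}^{|\mathcal{S}|}\to\mathbb{R}^{|\mathcal{S}|}$ is given by $(\mathcal{P}^{(s)}(u))_{s'}=u_{s'}$ for $s'\ne s$ and $(\mathcal{P}^{(s)}(u))_s=\mathrm{prox}_{\gamma_{j_s}g_{j_s}}(u_s-\gamma_{j_s}\nabla_{j_s}f(\pi(u)))$. *)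

theory Defs
  imports "HOL-Analysis.Analysis"
begin

definition proper_fn :: "('a \<Rightarrow> ereal) \<Rightarrow> bool" where
  "proper_fn h \<longleftrightarrow> (\<forall>x. h x \<noteq> -\<infinity>) \<and> (\<exists>x. h x \<noteq> \<infinity>)"

text \<open>Closed = lower semicontinuous.\<close>
definition lsc_fn :: "('a::topological_space \<Rightarrow> ereal) \<Rightarrow> bool" where
  "lsc_fn h \<longleftrightarrow> (\<forall>x c. c < h x \<longrightarrow> (\<forall>\<^sub>F y in nhds x. c < h y))"

definition lower_bounded_fn :: "('a \<Rightarrow> ereal) \<Rightarrow> bool" where
  "lower_bounded_fn h \<longleftrightarrow> (\<exists>c::real. \<forall>x. ereal c \<le> h x)"

definition ereal_convex :: "(real \<Rightarrow> ereal) \<Rightarrow> bool" where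
  "ereal_convex h \<longleftrightarrow> (\<forall>x y t. 0 \<le> t \<and> t \<le> 1 \<longrightarrow>
      h ((1 - t) * x + t * y) \<le> ereal (1 - t) * h x + ereal t * h y)"

definition fsubdiff :: "('a::real_inner \<Rightarrow> ereal) \<Rightarrow> 'a \<Rightarrow> 'a set" where
  "fsubdiff h x = (if \<bar>h x\<bar> = \<infinity> then {} else
     {v. \<forall>e>0. \<exists>d>0. \<forall>y. dist y x < d \<longrightarrow>
            h x + ereal (inner v (y - x) - e * norm (y - x)) \<le> h y})"

definition gsupp :: "('n \<Rightarrow> real \<Rightarrow> ereal) \<Rightarrow> real^'n \<Rightarrow> 'n set" where
  "gsupp g \<beta> = {j. \<exists>v. fsubdiff (g j) (\<beta> $ j) = {v}}"

definition prox :: "(real \<Rightarrow> ereal) \<Rightarrow> real \<Rightarrow> real" where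
  "prox h z = (THE u. \<forall>v. ereal ((u - z)\<^sup>2 / 2) + h u \<le> ereal ((v - z)\<^sup>2 / 2) + h v)"

definition vupd :: "real^'n \<Rightarrow> 'n \<Rightarrow> real \<Rightarrow> real^'n" where
  "vupd x j a = (\<chi> i. if i = j then a else x $ i)"

text \<open>One epoch of cyclic proximal coordinate descent, coordinates in increasing order;
  df is the gradient of f, L the coordinatewise Lipschitz constants.\<close>
definition cd_epoch :: "((real, 'n::{finite,linorder}) vec \<Rightarrow> (real, 'n) vec) \<Rightarrow> ('n \<Rightarrow> real \<Rightarrow> ereal)
    \<Rightarrow> ('n \<Rightarrow> real) \<Rightarrow> (real, 'n) vec \<Rightarrow> (real, 'n) vec" where
  "cd_epoch df g L \<beta> =
     fold (\<lambda>j b. vupd b j (prox (\<lambda>u. ereal (1 / L j) * g j u) (b $ j - (df b $ j) / L j)))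
          (sorted_list_of_set UNIV) \<beta>"

definition C3_on :: "'a::real_normed_vector set \<Rightarrow> ('a \<Rightarrow> 'b::real_normed_vector) \<Rightarrow> bool" where
  "C3_on U h \<longleftrightarrow> (\<exists>(D1 :: 'a \<Rightarrow> 'a \<Rightarrow>\<^sub>L 'b) (D2 :: 'a \<Rightarrow> 'a \<Rightarrow>\<^sub>L ('a \<Rightarrow>\<^sub>L 'b))
       (D3 :: 'a \<Rightarrow> 'a \<Rightarrow>\<^sub>L ('a \<Rightarrow>\<^sub>L ('a \<Rightarrow>\<^sub>L 'b))).
     (\<forall>x\<in>U. (h has_derivative blinfun_apply (D1 x)) (at x)) \<and>
     (\<forall>x\<in>U. (D1 has_derivative blinfun_apply (D2 x)) (at x)) \<and>
     (\<forall>x\<in>U. (D2 has_derivative blinfun_apply (D3 x)) (at x)) \<and>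
     continuous_on U D3)"

definition pos_def_mat :: "real^'s^'s \<Rightarrow> bool" where
  "pos_def_mat A \<longleftrightarrow> transpose A = A \<and> (\<forall>x. x \<noteq> 0 \<longrightarrow> 0 < x \<bullet> (A *v x))"

definition pos_semidef_mat :: "real^'s^'s \<Rightarrow> bool" where
  "pos_semidef_mat A \<longleftrightarrow> transpose A = A \<and> (\<forall>x. 0 \<le> x \<bullet> (A *v x))"

definition mat_sqrt :: "real^'s^'s \<Rightarrow> real^'s^'s" where
  "mat_sqrt A = (THE R. pos_semidef_mat R \<and> R ** R = A)"

definition twice_differentiable_at :: "(real^'m \<Rightarrow> real^'k) \<Rightarrow> real^'m \<Rightarrow> bool" where
  "twice_differentiable_at h x \<longleftrightarrow> (\<exists>D. (\<forall>\<^sub>F y in nhds x. (h has_derivative D y) (at y))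
      \<and> (\<lambda>y. matrix (D y)) differentiable (at x))"

definition emb :: "('s \<Rightarrow> 'n) \<Rightarrow> real^'n \<Rightarrow> real^'s \<Rightarrow> real^'n" where
  "emb js bh u = (\<chi> j. if j \<in> range js then u $ (inv js j) else bh $ j)"

definition Pmap :: "(real^'n \<Rightarrow> real^'n) \<Rightarrow> ('n \<Rightarrow> real \<Rightarrow> ereal) \<Rightarrow> ('n \<Rightarrow> real)
    \<Rightarrow> ('s \<Rightarrow> 'n) \<Rightarrow> real^'n \<Rightarrow> 's \<Rightarrow> real^'s \<Rightarrow> real^'s" where
  "Pmap df g \<gamma> js bh s u = vupd u s
      (prox (\<lambda>v. ereal (\<gamma> (js s)) * g (js s) v) (u $ s - \<gamma> (js s) * (df (emb js bh u) $ js s)))"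

definition psi_map :: "((real, 'n::finite) vec \<Rightarrow> (real, 'n) vec) \<Rightarrow> ('n \<Rightarrow> real \<Rightarrow> ereal) \<Rightarrow> ('n \<Rightarrow> real)
    \<Rightarrow> ('s \<Rightarrow> 'n) \<Rightarrow> (real, 'n) vec \<Rightarrow> (real, 's::{finite,linorder}) vec \<Rightarrow> (real, 's) vec" where
  "psi_map df g \<gamma> js bh u = fold (\<lambda>s v. Pmap df g \<gamma> js bh s v) (sorted_list_of_set UNIV) u"

end

theory Submission
  imports Defs
begin

lemma sym_inner:
  fixes A :: "real^'n^'n"
  assumes "transpose A = A"
  shows "x \<bullet> (A *v y) = (A *v x) \<bullet> y"
  by (metis assms dot_lmul_matrix vector_transpose_matrix)

lemma quad_zero_aux:
  fixes a K :: real
  assumes H: "\<And>t. 2*t*a \<le> t^2 * K"  shows "a = 0"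
proof (rule ccontr)
  assume a: "a \<noteq> 0"
  define c where "c = \<bar>K\<bar> + 1"
  have c: "c > 0" "K < c" unfolding c_def by auto
  have "2*(a/c)*a \<le> (a/c)^2 * K" by (rule H)
  then have "2*a^2*c \<le> a^2 * K" using c by (simp add: field_simps power2_eq_square)
  moreover have "a^2 > 0" using a by simp
  ultimately have "2*c \<le> K" by (simp add: mult.commute)
  with c show False by linarith
qed

lemma spectral_sub:
  fixes A :: "real^'n^'n"
  assumes sym: "transpose A = A"
  shows "subspace V \<Longrightarrow> (\<forall>x\<in>V. A *v x \<in> V) \<Longrightarrow> \<exists>B. finite B \<and> B \<subseteq> V \<and> pairwise orthogonal B
     \<and> (\<forall>b\<in>B. norm b = 1 \<and> A *v b = (b \<bullet> (A *v b)) *\<^sub>R b) \<and> span B = V"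
proof (induction "dim V" arbitrary: V rule: less_induct)
  case less
  show ?case
  proof (cases "V = {0}")
    case True then show ?thesis by (intro exI[of _ "{}"]) auto
  next
    case False
    then obtain v where v: "v \<in> V" "v \<noteq> 0" using less.prems subspace_0 by blast
    define S where "S = sphere (0::real^'n) 1 \<inter> V"
    have cS: "compact S" unfolding S_def using closed_subspace[OF less.prems(1)]
      by (intro compact_Int_closed) auto
    have "(1/norm v) *\<^sub>R v \<in> S" unfolding S_def using v less.prems(1)
      by (auto simp: subspace_scale)
    then have neS: "S \<noteq> {}" by auto
    have "continuous_on S (\<lambda>x. x \<bullet> (A *v x))"
      by (intro continuous_intros linear_continuous_on matrix_vector_mul_bounded_linear)
    from continuous_attains_sup[OF cS neS this] obtain x0 where
      x0S: "x0 \<in> S" and x0max: "\<forall>y\<in>S. y \<bullet> (A *v y) \<le> x0 \<bullet> (A *v x0)" by blast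
    define lam where "lam = x0 \<bullet> (A *v x0)"
    have x0V: "x0 \<in> V" and nx0: "norm x0 = 1" using x0S unfolding S_def by auto
    have x0x0: "x0 \<bullet> x0 = 1" using nx0 by (simp add: dot_square_norm)
    have bound: "w \<bullet> (A *v w) \<le> lam * (w \<bullet> w)" if w: "w \<in> V" for w
    proof (cases "w = 0")
      case True then show ?thesis by simp
    next
      case False
      have "(1/norm w) *\<^sub>R w \<in> S" unfolding S_def using w False less.prems(1)
        by (auto simp: subspace_scale)
      then have "((1/norm w) *\<^sub>R w) \<bullet> (A *v ((1/norm w) *\<^sub>R w)) \<le> lam"
        using x0max lam_def by blast
      then have "(w \<bullet> (A *v w)) / (norm w)^2 \<le> lam"
        by (simp add: matrix_vector_mult_scaleR power2_eq_square)
      moreover have "(norm w)^2 > 0" using False by simp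
      ultimately show ?thesis by (simp add: dot_square_norm divide_le_eq mult.commute)
    qed
    define y where "y = A *v x0 - lam *\<^sub>R x0"
    have yV: "y \<in> V" unfolding y_def using less.prems x0V
      by (simp add: subspace_diff subspace_scale)
    have yx0: "y \<bullet> x0 = 0" unfolding y_def lam_def
      by (simp add: inner_diff_left inner_diff_right x0x0 inner_commute)
    have yA: "y \<bullet> (A *v x0) = y \<bullet> y"
    proof -
      have "A *v x0 = y + lam *\<^sub>R x0" unfolding y_def by simp
      then show ?thesis by (simp add: inner_add_right yx0)
    qed
    have "2*t*(y \<bullet> y) \<le> t^2 * (lam * (y \<bullet> y) - y \<bullet> (A *v y))" for t
    proof -
      have "x0 + t *\<^sub>R y \<in> V" using less.prems x0V yV by (simp add: subspace_add subspace_scale)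
      from bound[OF this]
      have "(x0 + t *\<^sub>R y) \<bullet> (A *v (x0 + t *\<^sub>R y)) \<le> lam * ((x0 + t *\<^sub>R y) \<bullet> (x0 + t *\<^sub>R y))" .
      moreover have "x0 \<bullet> (A *v y) = y \<bullet> (A *v x0)"
        using sym_inner[OF sym, of x0 y] by (simp add: inner_commute)
      ultimately show ?thesis
        by (simp add: matrix_vector_right_distrib matrix_vector_mult_scaleR inner_add_left inner_add_right
            yA x0x0 lam_def[symmetric] yx0 inner_commute[of x0 y] power2_eq_square algebra_simps)
    qed
    then have "y \<bullet> y = 0" by (intro quad_zero_aux) 
    then have y0: "y = 0" by simp
    then have eig: "A *v x0 = lam *\<^sub>R x0" unfolding y_def by simp
    define W where "W = {w\<in>V. x0 \<bullet> w = 0}"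
    have subW: "subspace W" unfolding W_def subspace_def using less.prems(1)
      by (auto simp: subspace_0 subspace_add subspace_scale inner_add_right)
    have invW: "\<forall>x\<in>W. A *v x \<in> W"
    proof
      fix x assume x: "x \<in> W"
      have "x0 \<bullet> (A *v x) = (A *v x0) \<bullet> x" by (rule sym_inner[OF sym])
      also have "\<dots> = 0" using x by (simp add: eig W_def)
      finally show "A *v x \<in> W" using x less.prems(2) by (simp add: W_def)
    qed
    have "span W \<subset> span V"
    proof -
      have "W \<subseteq> V" "x0 \<in> V - W" using x0V x0x0 unfolding W_def by auto
      then have "W \<subset> V" by blast
      then show ?thesis using subW less.prems(1) by (simp add: span_eq_iff[THEN iffD2])
    qed
    then have "dim W < dim V" by (rule dim_psubset)
    from less.hyps[OF this subW invW] obtain B' where B':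
      "finite B'" "B' \<subseteq> W" "pairwise orthogonal B'"
      "\<forall>b\<in>B'. norm b = 1 \<and> A *v b = (b \<bullet> (A *v b)) *\<^sub>R b" "span B' = W" by blast
    show ?thesis
    proof (intro exI[of _ "insert x0 B'"] conjI)
      show "finite (insert x0 B')" using B' by simp
      show "insert x0 B' \<subseteq> V" using B' x0V unfolding W_def by auto
      show "pairwise orthogonal (insert x0 B')"
        using B'(2,3) unfolding pairwise_insert W_def orthogonal_def
        by (auto simp: inner_commute)
      show "\<forall>b\<in>insert x0 B'. norm b = 1 \<and> A *v b = (b \<bullet> (A *v b)) *\<^sub>R b"
        using B'(4) nx0 eig lam_def by auto
      show "span (insert x0 B') = V"
      proof
        show "span (insert x0 B') \<subseteq> V" using B'(2) x0V less.prems(1) unfolding W_def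
          by (intro span_minimal) auto
        show "V \<subseteq> span (insert x0 B')"
        proof
          fix v assume v: "v \<in> V"
          have "v - (x0 \<bullet> v) *\<^sub>R x0 \<in> W" unfolding W_def using v x0V less.prems(1)
            by (simp add: subspace_diff subspace_scale inner_diff_right x0x0)
          then show "v \<in> span (insert x0 B')" using B'(5) span_breakdown_eq by blast
        qed
      qed
    qed
  qed
qed

lemma inner_basis_sum:
  fixes B :: "'a::real_inner set"
  assumes "finite B" "pairwise orthogonal B" "\<forall>b\<in>B. norm b = 1" "c \<in> B"
  shows "c \<bullet> (\<Sum>b\<in>B. f b *\<^sub>R b) = f c"
proof -
  have "c \<bullet> (\<Sum>b\<in>B. f b *\<^sub>R b) = (\<Sum>b\<in>B. f b * (c \<bullet> b))"
    by (simp add: inner_sum_right)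
  also have "\<dots> = (\<Sum>b\<in>B. if b = c then f b else 0)"
  proof (rule sum.cong)
    fix b assume b: "b \<in> B"
    show "f b * (c \<bullet> b) = (if b = c then f b else 0)"
    proof (cases "b = c")
      case True then show ?thesis using assms(3) b by (simp add: dot_square_norm)
    next
      case False then show ?thesis using assms(2,4) b unfolding pairwise_def orthogonal_def by auto
    qed
  qed simp
  also have "\<dots> = f c" using assms(1,4) by simp
  finally show ?thesis .
qed

lemma basis_expand:
  fixes B :: "(real^'n) set"
  assumes "finite B" "pairwise orthogonal B" "\<forall>b\<in>B. norm b = 1" "span B = UNIV"
  shows "v = (\<Sum>b\<in>B. (b \<bullet> v) *\<^sub>R b)"
proof -
  have "v \<in> span B" using assms by simp
  then obtain u where u: "v = (\<Sum>b\<in>B. u b *\<^sub>R b)" using span_finite[OF assms(1)] by auto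
  have "\<And>c. c \<in> B \<Longrightarrow> c \<bullet> v = u c" unfolding u by (rule inner_basis_sum[OF assms(1-3)])
  then show ?thesis by (subst u) (auto intro!: sum.cong)
qed

lemma psd_zero:
  fixes S :: "real^'n^'n"
  assumes "pos_semidef_mat S" "y \<bullet> (S *v y) = 0"
  shows "S *v y = 0"
proof -
  have sym: "transpose S = S" and ps: "\<And>x. 0 \<le> x \<bullet> (S *v x)" using assms(1) unfolding pos_semidef_mat_def by auto
  have "z \<bullet> (S *v y) = 0" for z
  proof -
    have "2*t*(-(z \<bullet> (S *v y))) \<le> t^2 * (z \<bullet> (S *v z))" for t
    proof -
      have "0 \<le> (y + t *\<^sub>R z) \<bullet> (S *v (y + t *\<^sub>R z))" by (rule ps)
      moreover have "y \<bullet> (S *v z) = z \<bullet> (S *v y)"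
        using sym_inner[OF sym, of y z] by (simp add: inner_commute)
      ultimately show ?thesis using assms(2)
        by (simp add: matrix_vector_right_distrib matrix_vector_mult_scaleR inner_add_left inner_add_right
             power2_eq_square algebra_simps)
    qed
    then have "-(z \<bullet> (S *v y)) = 0" by (rule quad_zero_aux)
    then show ?thesis by simp
  qed
  from this[of "S *v y"] show ?thesis by simp
qed

lemma mat_sqrt_props:
  fixes A :: "real^'n^'n"
  assumes pd: "pos_def_mat A"
  shows "transpose (mat_sqrt A) = mat_sqrt A \<and> mat_sqrt A ** mat_sqrt A = A \<and> invertible (mat_sqrt A)"
proof -
  have sym: "transpose A = A" and pdA: "\<And>x. x \<noteq> 0 \<Longrightarrow> 0 < x \<bullet> (A *v x)"
    using pd unfolding pos_def_mat_def by auto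
  obtain B :: "(real^'n) set" where B: "finite B" "pairwise orthogonal B"
     "\<forall>b\<in>B. norm b = 1 \<and> A *v b = (b \<bullet> (A *v b)) *\<^sub>R b" "span B = UNIV"
    using spectral_sub[OF sym, of UNIV] by auto
  have Bn: "\<forall>b\<in>B. norm b = 1" using B(3) by auto
  note expand = basis_expand[OF B(1,2) Bn B(4)]
  note ibs = inner_basis_sum[OF B(1,2) Bn]
  define lam where "lam b = b \<bullet> (A *v b)" for b
  have lampos: "lam b > 0" if "b \<in> B" for b
  proof -
    have "b \<noteq> 0" using Bn that by auto
    then show ?thesis using pdA[of b] unfolding lam_def by auto
  qed
  have Aeig: "A *v b = lam b *\<^sub>R b" if "b \<in> B" for b using B(3) that unfolding lam_def by auto
  have Aexp: "A *v v = (\<Sum>b\<in>B. (lam b * (b \<bullet> v)) *\<^sub>R b)" for v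
  proof -
    have "A *v v = A *v (\<Sum>b\<in>B. (b \<bullet> v) *\<^sub>R b)" using expand[of v] by simp
    also have "\<dots> = (\<Sum>b\<in>B. (lam b * (b \<bullet> v)) *\<^sub>R b)"
      by (simp add: vec.sum matrix_vector_mult_scaleR Aeig mult.commute cong: sum.cong)
    finally show ?thesis .
  qed
  define Rf where "Rf v = (\<Sum>b\<in>B. (sqrt (lam b) * (b \<bullet> v)) *\<^sub>R b)" for v
  have linRf: "linear Rf"
    by (rule linearI) (simp_all add: Rf_def inner_add_right scaleR_add_left sum.distrib
         distrib_left scaleR_sum_right algebra_simps)
  define R where "R = matrix Rf"
  have Rv: "R *v v = Rf v" for v unfolding R_def by (simp add: matrix_vector_mul(2)[OF linRf])
  have RR: "R ** R = A"
  proof -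
    have "(R ** R) *v v = A *v v" for v
    proof -
      have "(R ** R) *v v = Rf (Rf v)" by (simp add: Rv flip: matrix_vector_mul_assoc)
      also have "\<dots> = (\<Sum>b\<in>B. (sqrt (lam b) * (sqrt (lam b) * (b \<bullet> v))) *\<^sub>R b)"
        unfolding Rf_def[of "Rf v"] by (simp add: Rf_def ibs cong: sum.cong)
      also have "\<dots> = A *v v" unfolding Aexp
        by (rule sum.cong) (auto simp: lampos less_imp_le mult.assoc[symmetric])
      finally show ?thesis .
    qed
    then show ?thesis by (simp add: matrix_eq)
  qed
  have Rsym: "transpose R = R"
    unfolding R_def transpose_def matrix_def Rf_def
    by (simp add: vec_eq_iff sum_component inner_axis mult.commute mult.left_commute)
  have Rpsd: "pos_semidef_mat R"
    unfolding pos_semidef_mat_def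
  proof (intro conjI allI Rsym)
    fix x
    have "x \<bullet> (R *v x) = (\<Sum>b\<in>B. sqrt (lam b) * (b \<bullet> x) * (b \<bullet> x))"
      by (simp add: Rv Rf_def inner_sum_right inner_commute mult.assoc)
    also have "\<dots> \<ge> 0" by (intro sum_nonneg) (auto simp: lampos less_imp_le mult.assoc intro!: mult_nonneg_nonneg)
    finally show "0 \<le> x \<bullet> (R *v x)" .
  qed
  have Reig: "R *v w = sqrt mu *\<^sub>R w" if "A *v w = mu *\<^sub>R w" for w mu
  proof -
    have c: "sqrt (lam c) * (c \<bullet> w) = sqrt mu * (c \<bullet> w)" if cB: "c \<in> B" for c
    proof -
      have "c \<bullet> (A *v w) = (A *v c) \<bullet> w" by (rule sym_inner[OF sym])
      then have "mu * (c \<bullet> w) = lam c * (c \<bullet> w)" using \<open>A *v w = mu *\<^sub>R w\<close> Aeig[OF cB] by simp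
      then show ?thesis by (cases "c \<bullet> w = 0") auto
    qed
    have "R *v w = (\<Sum>b\<in>B. (sqrt mu * (b \<bullet> w)) *\<^sub>R b)" unfolding Rv Rf_def
      using c by (auto intro!: sum.cong)
    also have "\<dots> = sqrt mu *\<^sub>R w" by (subst (2) expand) (simp add: scaleR_sum_right)
    finally show ?thesis .
  qed
  have uniq: "T = R" if T: "pos_semidef_mat T \<and> T ** T = A" for T
  proof -
    have Tpsd: "pos_semidef_mat T" using T by (rule conjunct1)
    have TT: "T ** T = A" using T by (rule conjunct2)
    have Tsym: "transpose T = T" using Tpsd unfolding pos_semidef_mat_def by blast
    have TA: "T ** A = A ** T" by (simp add: TT[symmetric] matrix_mul_assoc)
    have comm: "R ** T = T ** R"
    proof -
      have "(R ** T) *v b = (T ** R) *v b" if bB: "b \<in> B" for b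
      proof -
        have "A *v (T *v b) = (T ** A) *v b" by (simp add: TA matrix_vector_mul_assoc)
        also have "\<dots> = T *v (A *v b)" by (simp add: matrix_vector_mul_assoc)
        also have "\<dots> = lam b *\<^sub>R (T *v b)" by (simp add: Aeig[OF bB] matrix_vector_mult_scaleR)
        finally have "A *v (T *v b) = lam b *\<^sub>R (T *v b)" .
        then have "R *v (T *v b) = sqrt (lam b) *\<^sub>R (T *v b)" by (rule Reig)
        moreover have "R *v b = sqrt (lam b) *\<^sub>R b" by (rule Reig[OF Aeig[OF bB]])
        ultimately show ?thesis by (simp add: matrix_vector_mul_assoc[symmetric] matrix_vector_mult_scaleR)
      qed
      then have "(R ** T) *v v = (T ** R) *v v" for v
        using linear_eq_on_span[of "(*v) (R ** T)" "(*v) (T ** R)" B v] B(4)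
        by (simp add: matrix_vector_mul_linear)
      then show ?thesis by (simp add: matrix_eq)
    qed
    have RT: "R *v x = T *v x" for x
    proof -
      define y where "y = R *v x - T *v x"
      have "R *v y + T *v y = (R ** R) *v x - (R ** T) *v x + (T ** R) *v x - (T ** T) *v x"
        unfolding y_def by (simp add: matrix_vector_mult_diff_distrib matrix_vector_mul_assoc)
      also have "\<dots> = 0" using comm RR TT by simp
      finally have "y \<bullet> (R *v y) + y \<bullet> (T *v y) = 0" by (metis inner_add_right inner_zero_right)
      moreover have "0 \<le> y \<bullet> (R *v y)" "0 \<le> y \<bullet> (T *v y)" using Rpsd Tpsd unfolding pos_semidef_mat_def by blast+
      ultimately have "y \<bullet> (R *v y) = 0" "y \<bullet> (T *v y) = 0" by linarith+
      then have Ry: "R *v y = 0" and Ty: "T *v y = 0" using psd_zero Rpsd Tpsd by blast+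
      have "y \<bullet> y = y \<bullet> (R *v x) - y \<bullet> (T *v x)"
        unfolding y_def[symmetric] by (simp add: y_def inner_diff_right)
      also have "\<dots> = (R *v y) \<bullet> x - (T *v y) \<bullet> x"
        by (simp add: sym_inner[OF Rsym] sym_inner[OF Tsym])
      finally have "y \<bullet> y = (R *v y) \<bullet> x - (T *v y) \<bullet> x" .
      then have "y \<bullet> y = 0" using Ry Ty by simp
      then show ?thesis unfolding y_def by simp
    qed
    show ?thesis unfolding matrix_eq using RT by metis
  qed
  have msq: "mat_sqrt A = R" unfolding mat_sqrt_def
  proof (rule the_equality)
    show "pos_semidef_mat R \<and> R ** R = A" using Rpsd RR by (rule conjI)
    show "T = R" if "pos_semidef_mat T \<and> T ** T = A" for T using that by (rule uniq)
  qed
  have inv: "invertible R"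
  proof -
    have "inj ((*v) R)"
    proof (subst linear_injective_0[OF matrix_vector_mul_linear], intro allI impI)
      fix x assume "R *v x = 0"
      then have "A *v x = 0" unfolding RR[symmetric] matrix_vector_mul_assoc[symmetric] by simp
      then have "x \<bullet> (A *v x) = 0" by simp
      then show "x = 0" using pdA by fastforce
    qed
    then show ?thesis using matrix_left_invertible_injective invertible_left_inverse by blast
  qed
  show ?thesis using msq Rsym RR inv by simp
qed

lemma deriv_lower:
  fixes f :: "real \<Rightarrow> real"
  assumes "DERIV f x :> D" "\<forall>\<^sub>F y in at x. c \<le> (f y - f x) / (y - x)"
  shows "c \<le> D"
  using assms(1) unfolding has_field_derivative_iff
  by (rule tendsto_lowerbound) (use assms(2) in auto)

locale wc =
  fixes g :: "real \<Rightarrow> ereal" and gam alpha :: real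
  assumes gam: "gam > 0" and alpha: "alpha < 1"
    and proper: "\<forall>x. g x \<noteq> -\<infinity>"
    and conv: "ereal_convex (\<lambda>x. ereal gam * g x + ereal (alpha / 2 * x\<^sup>2))"
begin

definition "dm = {x. g x \<noteq> \<infinity>}"
definition "G x = real_of_ereal (g x)"
definition "C x = gam * G x + alpha / 2 * x\<^sup>2"

lemma g_eq: "x \<in> dm \<Longrightarrow> g x = ereal (G x)"
  using proper unfolding dm_def G_def by (cases "g x") auto

lemma conv_step:
  assumes "x \<in> dm" "y \<in> dm" "0 \<le> t" "t \<le> 1"
  shows "(1 - t) * x + t * y \<in> dm \<and> C ((1 - t) * x + t * y) \<le> (1 - t) * C x + t * C y"
proof -
  define m where "m = (1 - t) * x + t * y"
  have H: "ereal gam * g m + ereal (alpha / 2 * m\<^sup>2)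
        \<le> ereal (1 - t) * (ereal gam * g x + ereal (alpha / 2 * x\<^sup>2)) + ereal t * (ereal gam * g y + ereal (alpha / 2 * y\<^sup>2))"
    using conv assms(3,4) unfolding ereal_convex_def m_def by blast
  have rhs: "ereal (1 - t) * (ereal gam * g x + ereal (alpha / 2 * x\<^sup>2)) + ereal t * (ereal gam * g y + ereal (alpha / 2 * y\<^sup>2))
      = ereal ((1 - t) * C x + t * C y)"
    using assms(1,2) by (simp add: g_eq C_def)
  have "g m \<noteq> \<infinity>"
  proof
    assume gm: "g m = \<infinity>"
    have "ereal gam * g m = \<infinity>" using gam gm by simp
    then have inf: "ereal gam * g m + ereal (alpha / 2 * m\<^sup>2) = \<infinity>" by simp
    have "ereal gam * g m + ereal (alpha / 2 * m\<^sup>2) \<le> ereal ((1 - t) * C x + t * C y)"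
      using H unfolding rhs .
    then show False unfolding inf by simp
  qed
  then have mdom: "m \<in> dm" unfolding dm_def by simp
  then have "ereal (C m) \<le> ereal ((1 - t) * C x + t * C y)"
    using H rhs by (simp add: g_eq C_def)
  then show ?thesis using mdom unfolding m_def by simp
qed

lemma convex_dom: "convex dm"
proof (rule convexI)
  fix x y u v :: real assume "x \<in> dm" "y \<in> dm" "0 \<le> u" "0 \<le> v" "u + v = 1"
  then have u: "u = 1 - v" by simp
  show "u *\<^sub>R x + v *\<^sub>R y \<in> dm" using conv_step[of x y v] \<open>x \<in> dm\<close> \<open>y \<in> dm\<close> \<open>0 \<le> v\<close> \<open>0 \<le> u\<close> by (simp add: u)
qed

lemma convex_C: "convex_on dm C"
proof (rule convex_onI)
  fix t x y :: real assume "0 < t" "t < 1" "x \<in> dm" "y \<in> dm"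
  then show "C ((1 - t) *\<^sub>R x + t *\<^sub>R y) \<le> (1 - t) * C x + t * C y"
    using conv_step[of x y t] by simp
qed (rule convex_dom)

lemma tangent:
  assumes U: "open U" "U \<subseteq> dm" "c \<in> U" and d: "DERIV G c :> d" and x: "x \<in> dm"
  shows "C x - C c \<ge> (gam * d + alpha * c) * (x - c)"
proof -
  have "DERIV C c :> gam * d + alpha * c"
    unfolding C_def[abs_def] by (auto intro!: derivative_eq_intros d)
  then have "(C has_field_derivative gam * d + alpha * c) (at c within dm)"
    by (rule has_field_derivative_at_within)
  moreover have "c \<in> interior dm" using U interior_maximal by blast
  ultimately show ?thesis
    using convex_on_imp_above_tangent[OF convex_C convex_connected[OF convex_dom]] x by blast
qed

lemma prox_char:
  assumes U: "open U" "U \<subseteq> dm" "u \<in> U" and d: "DERIV G u :> d"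
  shows "prox (\<lambda>v. ereal gam * g v) (u + gam * d) = u"
proof -
  define z where "z = u + gam * d"
  define obj where "obj v = ereal ((v - z)\<^sup>2 / 2) + ereal gam * g v" for v
  have udom: "u \<in> dm" using U by auto
  have ou: "obj u = ereal ((u - z)\<^sup>2 / 2 + gam * G u)" unfolding obj_def using g_eq[OF udom] by simp
  have strict: "obj u < obj v" if "v \<noteq> u" for v
  proof (cases "v \<in> dm")
    case False
    then have "g v = \<infinity>" unfolding dm_def by simp
    then have "obj v = \<infinity>" unfolding obj_def using gam by simp
    then show ?thesis using ou by simp
  next
    case True
    have ov: "obj v = ereal ((v - z)\<^sup>2 / 2 + gam * G v)" unfolding obj_def using g_eq[OF True] by simp
    have T: "C v - C u \<ge> (gam * d + alpha * u) * (v - u)" by (rule tangent[OF U d True])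
    have iden: "((v - z)\<^sup>2 / 2 + gam * G v) - ((u - z)\<^sup>2 / 2 + gam * G u)
        = (C v - C u - (gam * d + alpha * u) * (v - u)) + (1 - alpha) / 2 * (v - u)\<^sup>2"
      unfolding C_def z_def by (simp add: power2_eq_square field_simps)
    have "(1 - alpha) / 2 * (v - u)\<^sup>2 > 0" using alpha that by simp
    then have "(u - z)\<^sup>2 / 2 + gam * G u < (v - z)\<^sup>2 / 2 + gam * G v" using iden T by linarith
    then show ?thesis using ou ov by simp
  qed
  have "(THE w. \<forall>v. obj w \<le> obj v) = u"
  proof (rule the_equality)
    show "\<forall>v. obj u \<le> obj v" using strict by (metis order.order_iff_strict)
    show "w = u" if "\<forall>v. obj w \<le> obj v" for w
    proof (rule ccontr)
      assume "w \<noteq> u"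
      then have "obj u < obj w" by (rule strict)
      moreover have "obj w \<le> obj u" using that by blast
      ultimately show False by simp
    qed
  qed
  then show ?thesis unfolding prox_def obj_def z_def by simp
qed

lemma q_mono:
  assumes U: "open U" "U \<subseteq> dm" "a \<in> U" "b \<in> U" and da: "DERIV G a :> da" and db: "DERIV G b :> db"
    and ab: "a < b"
  shows "(b + gam * db) - (a + gam * da) \<ge> (1 - alpha) * (b - a)"
proof -
  have "C b - C a \<ge> (gam * da + alpha * a) * (b - a)" using tangent[OF U(1,2,3) da] U by auto
  moreover have "C a - C b \<ge> (gam * db + alpha * b) * (a - b)" using tangent[OF U(1,2,4) db] U by auto
  ultimately have "0 \<le> (gam * db + alpha * b - gam * da - alpha * a) * (b - a)" by (simp add: algebra_simps)
  then have "0 \<le> gam * db + alpha * b - gam * da - alpha * a" using ab by (simp add: zero_le_mult_iff)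
  then show ?thesis by (simp add: algebra_simps)
qed


lemma qderiv_lower:
  assumes U: "open U" "U \<subseteq> dm" "x \<in> U"
    and G1: "\<forall>x\<in>U. DERIV G x :> G1 x" and G2: "\<forall>x\<in>U. DERIV G1 x :> G2 x"
  shows "1 + gam * G2 x \<ge> 1 - alpha"
proof -
  define q where "q y = y + gam * G1 y" for y
  have dq: "DERIV q x :> 1 + gam * G2 x" unfolding q_def[abs_def]
    using G2 U(3) by (auto intro!: derivative_eq_intros)
  have "\<forall>\<^sub>F y in at x. y \<in> U - {x}" by (rule eventually_at_in_open[OF U(1,3)])
  then have "\<forall>\<^sub>F y in at x. 1 - alpha \<le> (q y - q x) / (y - x)"
  proof eventually_elim
    case (elim y)
    then have yU: "y \<in> U" and yx: "y \<noteq> x" by auto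
    show ?case
    proof (cases "x < y")
      case True
      have "q y - q x \<ge> (1 - alpha) * (y - x)" unfolding q_def
        using q_mono[OF U(1,2,3) yU _ _ True] G1 U(3) yU by auto
      then show ?thesis using True by (simp add: pos_le_divide_eq)
    next
      case False
      then have yx': "y < x" using yx by simp
      have "q x - q y \<ge> (1 - alpha) * (x - y)" unfolding q_def
        using q_mono[OF U(1,2) yU U(3) _ _ yx'] G1 U(3) yU by auto
      moreover have "(q y - q x) / (y - x) = (q x - q y) / (x - y)"
        by (simp add: divide_simps) (simp add: algebra_simps)
      ultimately show ?thesis using yx' by (simp add: pos_le_divide_eq)
    qed
  qed
  then show ?thesis by (rule deriv_lower[OF dq])
qed

lemma prox_local:
  assumes U: "open U" "U \<subseteq> dm" "u0 \<in> U"
    and G1: "\<forall>x\<in>U. DERIV G x :> G1 x" and G2: "\<forall>x\<in>U. DERIV G1 x :> G2 x"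
  shows "\<exists>a b. a < u0 + gam * G1 u0 \<and> u0 + gam * G1 u0 < b \<and>
     (\<forall>z\<in>{a<..<b}. prox (\<lambda>v. ereal gam * g v) z \<in> U \<and>
        DERIV (prox (\<lambda>v. ereal gam * g v)) z :> inverse (1 + gam * G2 (prox (\<lambda>v. ereal gam * g v) z)))"
proof -
  define p where "p = prox (\<lambda>v. ereal gam * g v)"
  define q where "q y = y + gam * G1 y" for y
  have pq: "p (q y) = y" if "y \<in> U" for y
    unfolding p_def q_def using prox_char[OF U(1,2) that] G1 that by auto
  have dq: "DERIV q y :> 1 + gam * G2 y" if "y \<in> U" for y unfolding q_def[abs_def]
    using G2 that by (auto intro!: derivative_eq_intros)
  have dpos: "1 + gam * G2 y > 0" if "y \<in> U" for y
    using qderiv_lower[OF U(1,2) that G1 G2] alpha by linarith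
  obtain d where d: "d > 0" "cball u0 d \<subseteq> U" using U(1,3) open_contains_cball by blast
  define a0 where "a0 = u0 - d"
  define b0 where "b0 = u0 + d"
  have sub: "{a0..b0} \<subseteq> U"
  proof
    fix x assume "x \<in> {a0..b0}"
    then have "x \<in> cball u0 d" unfolding a0_def b0_def cball_def dist_real_def by auto
    then show "x \<in> U" using d by blast
  qed
  have a0U: "a0 \<in> U" and b0U: "b0 \<in> U" using sub d unfolding a0_def b0_def by auto
  have qm: "q y2 - q y1 \<ge> (1 - alpha) * (y2 - y1)" if "y1 \<in> U" "y2 \<in> U" "y1 < y2" for y1 y2
    unfolding q_def using q_mono[OF U(1,2) that(1,2) _ _ that(3)] G1 that by auto
  have qa: "q a0 < q u0" using qm[OF a0U U(3)] d alpha unfolding a0_def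
    by (smt (verit) mult_pos_pos)
  have qb: "q u0 < q b0" using qm[OF U(3) b0U] d alpha unfolding b0_def
    by (smt (verit) mult_pos_pos)
  have contq: "isCont q y" if "y \<in> U" for y using dq[OF that] by (rule DERIV_isCont)
  have inv: "\<exists>w. a0 < w \<and> w < b0 \<and> q w = z" if z: "q a0 < z" "z < q b0" for z
  proof -
    have "\<exists>w\<ge>a0. w \<le> b0 \<and> q w = z"
      by (rule IVT) (use z d sub contq in \<open>auto simp: a0_def b0_def\<close>)
    then obtain w where w: "a0 \<le> w" "w \<le> b0" "q w = z" by blast
    have "w \<noteq> a0" "w \<noteq> b0" using w z by auto
    then have "a0 < w" "w < b0" using w by auto
    then show ?thesis using w(3) by blast
  qed
  have A1: "q a0 < u0 + gam * G1 u0" using qa unfolding q_def by simp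
  have A2: "u0 + gam * G1 u0 < q b0" using qb unfolding q_def by simp
  have A3: "prox (\<lambda>v. ereal gam * g v) z \<in> U \<and>
        DERIV (prox (\<lambda>v. ereal gam * g v)) z :> inverse (1 + gam * G2 (prox (\<lambda>v. ereal gam * g v) z))"
    if "z \<in> {q a0<..<q b0}" for z
  proof -
    from that obtain w where w: "a0 < w" "w < b0" "q w = z" using inv by auto
    have wU: "w \<in> U" using w sub by auto
    have pz: "p z = w" using pq[OF wU] w by simp
    have B1: "prox (\<lambda>v. ereal gam * g v) z \<in> U" using pz wU unfolding p_def by simp
    have cont: "isCont p z"
    proof -
      define e where "e = min (w - a0) (b0 - w)"
      have e: "e > 0" using w unfolding e_def by simp
      have inU: "y \<in> U" if "\<bar>y - w\<bar> \<le> e" for y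
        using that sub unfolding e_def by (auto simp: abs_le_iff)
      have "isCont p (q w)"
        by (rule isCont_inverse_function[OF e]) (use inU pq contq in auto)
      then show ?thesis using w by simp
    qed
    have "DERIV p z :> inverse (1 + gam * G2 (p z))"
    proof (rule DERIV_inverse_function[where f = q and a = "q a0" and b = "q b0"])
      show "DERIV q (p z) :> 1 + gam * G2 (p z)" using dq wU pz by simp
      show "1 + gam * G2 (p z) \<noteq> 0" using dpos wU pz by (metis less_irrefl)
      show "q a0 < z" "z < q b0" using that by auto
      show "q (p y) = y" if yy: "q a0 < y" "y < q b0" for y
      proof -
        obtain w' where "a0 < w'" "w' < b0" "q w' = y" using inv[OF yy] by blast
        moreover then have "w' \<in> U" using sub by auto
        ultimately show ?thesis using pq by auto
      qed
      show "isCont p z" by (rule cont)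
    qed
    then show ?thesis using B1 unfolding p_def by blast
  qed
  show ?thesis using A1 A2 A3 by blast
qed

end

lemma norm_axis_gen: "norm (axis a (x::'v::real_normed_vector) :: 'v^'a) = norm x"
proof -
  have "(\<Sum>i\<in>UNIV. (norm ((axis a x :: 'v^'a) $ i))\<^sup>2) = (\<Sum>i\<in>UNIV. if i = a then (norm x)\<^sup>2 else 0)"
    by (rule sum.cong) (auto simp: axis_def)
  also have "\<dots> = (norm x)\<^sup>2" by simp
  finally show ?thesis unfolding norm_vec_def L2_set_def by simp
qed

lemma bounded_linear_axis: "bounded_linear (axis a :: 'v::real_normed_vector \<Rightarrow> 'v^'a)"
proof (rule bounded_linear_intro[where K=1])
  show "axis a (x + y) = (axis a x + axis a y :: 'v^'a)" for x y by (simp add: vec_eq_iff axis_def)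
  show "axis a (r *\<^sub>R x) = (r *\<^sub>R axis a x :: 'v^'a)" for r x by (simp add: vec_eq_iff axis_def)
  show "norm (axis a x :: 'v^'a) \<le> norm x * 1" for x by (simp add: norm_axis_gen)
qed

lemma vec_lambda_sum_axis: "(\<chi> a. f a) = (\<Sum>a\<in>UNIV. axis a (f a) :: 'v::comm_monoid_add^'a)"
  by (simp add: vec_eq_iff sum_component axis_def)

lemma vec_lambda_has_derivative:
  assumes "\<And>a. (F a has_derivative F' a) (at x)"
  shows "((\<lambda>y. (\<chi> a. F a y) :: 'v::real_normed_vector^'a) has_derivative (\<lambda>h. \<chi> a. F' a h)) (at x)"
proof -
  have "((\<lambda>y. \<Sum>a\<in>UNIV. (axis a (F a y) :: 'v^'a)) has_derivative (\<lambda>h. \<Sum>a\<in>UNIV. axis a (F' a h))) (at x)"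
    by (intro has_derivative_sum bounded_linear.has_derivative[OF bounded_linear_axis] assms)
  then show ?thesis by (simp add: vec_lambda_sum_axis[symmetric])
qed

lemma vec_lambda_differentiable:
  assumes "\<And>a. F a differentiable (at x)"
  shows "(\<lambda>y. (\<chi> a. F a y) :: 'v::real_normed_vector^'a) differentiable (at x)"
proof -
  obtain F' where "\<And>a. (F a has_derivative F' a) (at x)" using assms unfolding differentiable_def by metis
  then show ?thesis unfolding differentiable_def by (blast intro: vec_lambda_has_derivative)
qed

lemma bounded_bilinear_matmul: "bounded_bilinear (\<lambda>(A::real^'b^'a) (B::real^'c^'b). A ** B)"
proof -
  have "bilinear (\<lambda>(A::real^'b^'a) (B::real^'c^'b). A ** B)"
    unfolding bilinear_def
  proof (intro conjI allI)
    fix A :: "real^'b^'a" and B :: "real^'c^'b"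
    show "linear (\<lambda>B::real^'c^'b. A ** B)"
      by (rule linearI) (simp_all add: vec_eq_iff matrix_matrix_mult_def sum_distrib_left sum.distrib distrib_left mult.left_commute)
    show "linear (\<lambda>A::real^'b^'a. A ** B)"
      by (rule linearI) (simp_all add: vec_eq_iff matrix_matrix_mult_def sum_distrib_left sum.distrib distrib_right mult.assoc)
  qed
  then show ?thesis by (simp add: bilinear_conv_bounded_bilinear)
qed


lemma differentiable_matmul:
  fixes f :: "real^'a \<Rightarrow> real^'c^'b" and g :: "real^'a \<Rightarrow> real^'d^'c"
  assumes "f differentiable (at x)" "g differentiable (at x)"
  shows "(\<lambda>y. f y ** g y) differentiable (at x)"
proof -
  obtain f' g' where "(f has_derivative f') (at x)" "(g has_derivative g') (at x)"
    using assms unfolding differentiable_def by blast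
  from bounded_bilinear.FDERIV[OF bounded_bilinear_matmul this]
  show ?thesis unfolding differentiable_def by auto
qed

definition C2 :: "(real^'a \<Rightarrow> real^'b) \<Rightarrow> real^'a \<Rightarrow> (real^'a \<Rightarrow> real^'a^'b) \<Rightarrow> bool" where
  "C2 h x J \<longleftrightarrow> (\<forall>\<^sub>F y in nhds x. (h has_derivative (\<lambda>v. J y *v v)) (at y)) \<and> J differentiable (at x)"

definition C2s :: "(real^'a \<Rightarrow> real) \<Rightarrow> real^'a \<Rightarrow> (real^'a \<Rightarrow> real^'a) \<Rightarrow> bool" where
  "C2s h x Gr \<longleftrightarrow> (\<forall>\<^sub>F y in nhds x. (h has_derivative (\<lambda>v. Gr y \<bullet> v)) (at y)) \<and> Gr differentiable (at x)"

lemma ev_comp_cont: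
  assumes "isCont h x" "\<forall>\<^sub>F z in nhds (h x). P z"
  shows "\<forall>\<^sub>F y in nhds x. P (h y)"
proof -
  have "(h \<longlongrightarrow> h x) (nhds x)" using assms(1) tendsto_at_iff_tendsto_nhds isCont_def by blast
  then show ?thesis using assms(2) unfolding filterlim_iff by blast
qed

lemma ev_comp:
  assumes "\<forall>\<^sub>F y in nhds x. (h has_derivative h' y) (at y)" "\<forall>\<^sub>F z in nhds (h x). P z"
  shows "\<forall>\<^sub>F y in nhds x. P (h y)"
proof -
  have "(h has_derivative h' x) (at x)" using eventually_nhds_x_imp_x[OF assms(1)] .
  then have "isCont h x" using has_derivative_continuous by blast
  then show ?thesis using ev_comp_cont assms(2) by blast
qed

lemma C2_comp:
  assumes h1: "C2 h1 x J1" and h2: "C2 h2 (h1 x) J2"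
  shows "C2 (\<lambda>y. h2 (h1 y)) x (\<lambda>y. J2 (h1 y) ** J1 y)"
proof -
  have e1: "\<forall>\<^sub>F y in nhds x. (h1 has_derivative (\<lambda>v. J1 y *v v)) (at y)" using h1 unfolding C2_def by blast
  have e2: "\<forall>\<^sub>F y in nhds x. (h2 has_derivative (\<lambda>v. J2 (h1 y) *v v)) (at (h1 y))"
    using ev_comp[OF e1] h2 unfolding C2_def by blast
  have ev: "\<forall>\<^sub>F y in nhds x. ((\<lambda>y. h2 (h1 y)) has_derivative (\<lambda>v. (J2 (h1 y) ** J1 y) *v v)) (at y)"
    using e1 e2
  proof eventually_elim
    case (elim y)
    from has_derivative_compose[OF elim(1) elim(2)] show ?case by (simp add: matrix_vector_mul_assoc)
  qed
  have d1: "h1 differentiable (at x)" using eventually_nhds_x_imp_x[OF e1] unfolding differentiable_def by blast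
  have dJ1: "J1 differentiable (at x)" and dJ2: "J2 differentiable (at (h1 x))" using h1 h2 unfolding C2_def by auto
  have "(\<lambda>y. J2 (h1 y)) differentiable (at x)" using differentiable_chain_at[OF d1 dJ2] by (simp add: o_def)
  then have "(\<lambda>y. J2 (h1 y) ** J1 y) differentiable (at x)" using dJ1 by (rule differentiable_matmul)
  then show ?thesis using ev unfolding C2_def by blast
qed

lemma C2_id: "C2 (\<lambda>y. y) x (\<lambda>_. mat 1)"
proof -
  have eq: "((*v) (mat 1)) = (\<lambda>v::real^'a. v)" by (rule ext) simp
  show ?thesis unfolding C2_def eq by (simp add: has_derivative_ident differentiable_const)
qed

lemma C2s_comp_real:
  assumes l: "C2s l x Gl" and p: "\<forall>\<^sub>F z in nhds (l x). DERIV p z :> p' z" and p': "p' differentiable (at (l x))"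
  shows "C2s (\<lambda>y. p (l y)) x (\<lambda>y. p' (l y) *\<^sub>R Gl y)"
proof -
  have e1: "\<forall>\<^sub>F y in nhds x. (l has_derivative (\<lambda>v. Gl y \<bullet> v)) (at y)" using l unfolding C2s_def by blast
  have e2: "\<forall>\<^sub>F y in nhds x. DERIV p (l y) :> p' (l y)" using ev_comp[OF e1 p] .
  have ev: "\<forall>\<^sub>F y in nhds x. ((\<lambda>y. p (l y)) has_derivative (\<lambda>v. (p' (l y) *\<^sub>R Gl y) \<bullet> v)) (at y)"
    using e1 e2
  proof eventually_elim
    case (elim y)
    from has_derivative_compose[OF elim(1) elim(2)[unfolded has_field_derivative_def]]
    show ?case by simp
  qed
  have d1: "l differentiable (at x)" using eventually_nhds_x_imp_x[OF e1] unfolding differentiable_def by blast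
  have "(\<lambda>y. p' (l y)) differentiable (at x)" using differentiable_chain_at[OF d1 p'] by (simp add: o_def)
  moreover have "Gl differentiable (at x)" using l unfolding C2s_def by blast
  ultimately have "(\<lambda>y. p' (l y) *\<^sub>R Gl y) differentiable (at x)" by (rule differentiable_scaleR)
  then show ?thesis using ev unfolding C2s_def by blast
qed

definition Jv :: "'a \<Rightarrow> real^'a \<Rightarrow> real^'a^'a" where
  "Jv s w = (\<chi> a b. if a = s then w $ b else (if a = b then 1 else 0))"

lemma Jv_mult: "Jv s w *v v = v + (w \<bullet> v - v $ s) *\<^sub>R axis s 1"
proof -
  have "(Jv s w *v v) $ a = (v + (w \<bullet> v - v $ s) *\<^sub>R axis s 1) $ a" for a
  proof (cases "a = s")
    case True then show ?thesis by (simp add: Jv_def matrix_vector_mult_def inner_vec_def axis_def)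
  next
    case False
    have "(\<Sum>b\<in>UNIV. (if a = b then 1 else 0) * v $ b) = (\<Sum>b\<in>UNIV. if a = b then v $ b else 0)"
      by (rule sum.cong) auto
    then have "(\<Sum>b\<in>UNIV. (if a = b then 1 else 0) * v $ b) = v $ a" by simp
    then show ?thesis using False by (simp add: Jv_def matrix_vector_mult_def axis_def)
  qed
  then show ?thesis by (simp add: vec_eq_iff)
qed

lemma C2s_vupd:
  assumes "C2s phi x Gr"
  shows "C2 (\<lambda>u. vupd u s (phi u)) x (\<lambda>y. Jv s (Gr y))"
proof -
  have eq: "(\<lambda>u. vupd u s (phi u)) = (\<lambda>u. u + (phi u - u $ s) *\<^sub>R axis s 1)"
    by (rule ext) (simp add: vupd_def vec_eq_iff axis_def)
  have e1: "\<forall>\<^sub>F y in nhds x. (phi has_derivative (\<lambda>v. Gr y \<bullet> v)) (at y)" using assms unfolding C2s_def by blast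
  have ev: "\<forall>\<^sub>F y in nhds x. ((\<lambda>u. vupd u s (phi u)) has_derivative (\<lambda>v. Jv s (Gr y) *v v)) (at y)"
    using e1
  proof eventually_elim
    case (elim y)
    have "((\<lambda>u. u + (phi u - u $ s) *\<^sub>R axis s 1) has_derivative (\<lambda>v. v + (Gr y \<bullet> v - v $ s) *\<^sub>R axis s 1)) (at y)"
      by (intro has_derivative_add has_derivative_ident has_derivative_scaleR_left has_derivative_diff elim
          bounded_linear_imp_has_derivative bounded_linear_vec_nth)
    then show ?case unfolding eq Jv_mult .
  qed
  have "(\<lambda>y. Jv s (Gr y)) differentiable (at x)"
  proof -
    have dG: "Gr differentiable (at x)" using assms unfolding C2s_def by blast
    have "(\<lambda>y. Gr y $ b) differentiable (at x)" for b
    proof -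
      have "(\<lambda>w::real^'a. w $ b) differentiable (at (Gr x))"
        using bounded_linear_imp_differentiable[OF bounded_linear_vec_nth] .
      from differentiable_chain_at[OF dG this] show ?thesis by (simp add: o_def)
    qed
    then have comp: "(\<lambda>y. (if a = s then Gr y $ b else (if a = b then 1 else 0))) differentiable (at x)" for a b
      by (cases "a = s") (simp_all add: differentiable_const)
    have inner: "(\<lambda>y. \<chi> b. (if a = s then Gr y $ b else (if a = b then 1 else 0))) differentiable (at x)" for a
      by (rule vec_lambda_differentiable) (rule comp)
    show ?thesis unfolding Jv_def by (rule vec_lambda_differentiable) (rule inner)
  qed
  then show ?thesis using ev unfolding C2_def by blast
qed

lemma C2s_lin:
  assumes f: "C2s f x Gf" and g: "C2s g x Gg"
  shows "C2s (\<lambda>u. f u - c * g u) x (\<lambda>y. Gf y - c *\<^sub>R Gg y)"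
proof -
  have ef: "\<forall>\<^sub>F y in nhds x. (f has_derivative (\<lambda>v. Gf y \<bullet> v)) (at y)" using f unfolding C2s_def by blast
  have eg: "\<forall>\<^sub>F y in nhds x. (g has_derivative (\<lambda>v. Gg y \<bullet> v)) (at y)" using g unfolding C2s_def by blast
  have ev: "\<forall>\<^sub>F y in nhds x. ((\<lambda>u. f u - c * g u) has_derivative (\<lambda>v. (Gf y - c *\<^sub>R Gg y) \<bullet> v)) (at y)"
    using ef eg
  proof eventually_elim
    case (elim y)
    have "((\<lambda>u. f u - c * g u) has_derivative (\<lambda>v. Gf y \<bullet> v - c * (Gg y \<bullet> v))) (at y)"
      by (intro has_derivative_diff has_derivative_mult_right elim)
    then show ?case by (simp add: inner_diff_left)
  qed
  have "(\<lambda>y. Gf y - c *\<^sub>R Gg y) differentiable (at x)"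
    using f g unfolding C2s_def by (intro differentiable_diff differentiable_scaleR differentiable_const) auto
  then show ?thesis using ev unfolding C2s_def by blast
qed

lemma C2s_nth: "C2s (\<lambda>u. u $ s) x (\<lambda>_. axis s 1)"
proof -
  have "((\<lambda>u::real^'a. u $ s) has_derivative (\<lambda>v. axis s 1 \<bullet> v)) (at y)" for y
  proof -
    have "(\<lambda>v::real^'a. axis s 1 \<bullet> v) = (\<lambda>v. v $ s)" by (simp add: inner_commute inner_axis)
    then show ?thesis using bounded_linear_imp_has_derivative[OF bounded_linear_vec_nth] by simp
  qed
  then show ?thesis unfolding C2s_def by (simp add: differentiable_const)
qed

lemma C2s_affine:
  fixes A :: "real^'a^'b"
  assumes "C2s f (A *v x + c) H"
  shows "C2s (\<lambda>u. f (A *v u + c)) x (\<lambda>y. transpose A *v H (A *v y + c))"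
proof -
  have daff: "((\<lambda>u. A *v u + c) has_derivative (\<lambda>v. A *v v)) (at y)" for y
    by (intro has_derivative_add_const bounded_linear_imp_has_derivative matrix_vector_mul_bounded_linear)
  have cont: "isCont (\<lambda>u. A *v u + c) x" using daff has_derivative_continuous by blast
  have e1: "\<forall>\<^sub>F z in nhds (A *v x + c). (f has_derivative (\<lambda>v. H z \<bullet> v)) (at z)" using assms unfolding C2s_def by blast
  have ev: "\<forall>\<^sub>F y in nhds x. ((\<lambda>u. f (A *v u + c)) has_derivative (\<lambda>v. (transpose A *v H (A *v y + c)) \<bullet> v)) (at y)"
    using ev_comp_cont[OF cont e1]
  proof eventually_elim
    case (elim y)
    from has_derivative_compose[OF daff elim]
    have "((\<lambda>u. f (A *v u + c)) has_derivative (\<lambda>v. H (A *v y + c) \<bullet> (A *v v))) (at y)" .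
    moreover have "H (A *v y + c) \<bullet> (A *v v) = (transpose A *v H (A *v y + c)) \<bullet> v" for v
      by (metis dot_lmul_matrix transpose_transpose vector_transpose_matrix)
    ultimately show ?case by simp
  qed
  have dH: "H differentiable (at (A *v x + c))" using assms unfolding C2s_def by blast
  have "(\<lambda>u. A *v u + c) differentiable (at x)" using daff unfolding differentiable_def by blast
  from differentiable_chain_at[OF this dH]
  have "(\<lambda>y. H (A *v y + c)) differentiable (at x)" by (simp add: o_def)
  then have "(\<lambda>y. transpose A *v H (A *v y + c)) differentiable (at x)"
    using differentiable_chain_at[OF _ bounded_linear_imp_differentiable[OF matrix_vector_mul_bounded_linear[of "transpose A"]]]
    by (simp add: o_def)
  then show ?thesis using ev unfolding C2s_def by blast
qed


lemma C2_fold: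
  fixes x :: "real^'a" and P :: "'s \<Rightarrow> real^'a \<Rightarrow> real^'a"
  assumes "\<forall>s\<in>set xs. C2 (P s) x (J s) \<and> P s x = x"
  shows "fold P xs x = x \<and> (\<exists>J'. C2 (fold P xs) x J' \<and> (\<forall>A::real^'a^'a. J' x ** A = fold (\<lambda>s A. J s x ** A) xs A))"
  using assms
proof (induction xs)
  case Nil
  have "C2 (\<lambda>y. y) x (\<lambda>_. mat 1)" by (rule C2_id)
  then show ?case by (auto simp: id_def intro!: exI[of _ "\<lambda>_. mat 1"])
next
  case (Cons a xs)
  then have Pa: "C2 (P a) x (J a)" "P a x = x" by auto
  have IH: "fold P xs x = x \<and> (\<exists>J'. C2 (fold P xs) x J' \<and> (\<forall>A::real^'a^'a. J' x ** A = fold (\<lambda>s A. J s x ** A) xs A))"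
  proof -
    have "\<forall>s\<in>set xs. C2 (P s) x (J s) \<and> P s x = x" using Cons.prems by simp
    then show ?thesis using Cons(1) by blast
  qed
  then have fx: "fold P xs x = x" by blast
  from IH obtain J' where J': "C2 (fold P xs) x J'" "\<forall>A::real^'a^'a. J' x ** A = fold (\<lambda>s A. J s x ** A) xs A"
    by blast
  have "C2 (\<lambda>y. fold P xs (P a y)) x (\<lambda>y. J' (P a y) ** J a y)"
    by (rule C2_comp[OF Pa(1)]) (use J' Pa in simp)
  then have C: "C2 (fold P (a # xs)) x (\<lambda>y. J' (P a y) ** J a y)" by (simp add: o_def)
  have "\<forall>A::real^'a^'a. (J' (P a x) ** J a x) ** A = fold (\<lambda>s A. J s x ** A) (a # xs) A"
  proof
    fix A :: "real^'a^'a"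
    have "(J' (P a x) ** J a x) ** A = J' x ** (J a x ** A)" using Pa(2) by (simp add: matrix_mul_assoc)
    also have "\<dots> = fold (\<lambda>s A. J s x ** A) xs (J a x ** A)" using J'(2) by blast
    finally show "(J' (P a x) ** J a x) ** A = fold (\<lambda>s A. J s x ** A) (a # xs) A" by simp
  qed
  then have "C2 (fold P (a # xs)) x (\<lambda>y. J' (P a y) ** J a y) \<and> (\<forall>A::real^'a^'a. (\<lambda>y. J' (P a y) ** J a y) x ** A = fold (\<lambda>s A. J s x ** A) (a # xs) A)"
    using C by simp
  then have "\<exists>J''. C2 (fold P (a # xs)) x J'' \<and> (\<forall>A::real^'a^'a. J'' x ** A = fold (\<lambda>s A. J s x ** A) (a # xs) A)"
    by blast
  moreover have "fold P (a # xs) x = x" using fx Pa(2) by simp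
  ultimately show ?case by blast
qed

lemma C2_twice:
  assumes "C2 h x J"
  shows "twice_differentiable_at h x \<and> matrix (frechet_derivative h (at x)) = J x"
proof -
  have ev: "\<forall>\<^sub>F y in nhds x. (h has_derivative (\<lambda>v. J y *v v)) (at y)" and dJ: "J differentiable (at x)"
    using assms unfolding C2_def by auto
  have m: "matrix (\<lambda>v. J y *v v) = J y" for y by (simp add: matrix_of_matrix_vector_mul)
  have "twice_differentiable_at h x" unfolding twice_differentiable_at_def
    by (rule exI[of _ "\<lambda>y v. J y *v v"]) (use ev dJ m in simp)
  moreover have "frechet_derivative h (at x) = (\<lambda>v. J x *v v)"
    using frechet_derivative_at[OF eventually_nhds_x_imp_x[OF ev]] by simp
  ultimately show ?thesis using m by simp
qed

lemma lin_inner: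
  fixes l :: "real^'n \<Rightarrow> real"
  assumes "linear l"
  shows "l h = (\<chi> i. l (axis i 1)) \<bullet> h"
proof -
  have "l h = l (\<Sum>i\<in>UNIV. h $ i *\<^sub>R axis i 1)"
    using basis_expansion[of h] by (simp add: scalar_mult_eq_scaleR)
  also have "\<dots> = (\<Sum>i\<in>UNIV. h $ i * l (axis i 1))"
    by (simp add: linear_sum[OF assms] linear_scale[OF assms])
  also have "\<dots> = (\<chi> i. l (axis i 1)) \<bullet> h"
    by (simp add: inner_vec_def mult.commute)
  finally show ?thesis .
qed

lemma f_part:
  fixes f :: "real^'n \<Rightarrow> real" and df :: "real^'n \<Rightarrow> real^'n"
  assumes f_grad: "\<forall>x. (f has_derivative (\<lambda>h. df x \<bullet> h)) (at x)"
    and f_C3: "\<exists>U. open U \<and> bh \<in> U \<and> C3_on U f"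
  shows "\<exists>H. (\<forall>j. C2s (\<lambda>z. df z $ j) bh (H j)) \<and>
             (\<forall>j i. matrix (frechet_derivative df (at bh)) $ j $ i = H j bh $ i)"
proof -
  obtain U D1 D2 D3 where U: "open U" "bh \<in> U"
    and d1: "\<forall>x\<in>U. (f has_derivative blinfun_apply (D1 x)) (at x)"
    and d2: "\<forall>x\<in>U. (D1 has_derivative blinfun_apply (D2 x)) (at x)"
    and d3: "\<forall>x\<in>U. (D2 has_derivative blinfun_apply (D3 x)) (at x)"
    using f_C3 unfolding C3_on_def by blast
  define H where "H j z = (\<chi> i. blinfun_apply (blinfun_apply (D2 z) (axis i 1)) (axis j 1))" for j z
  have dfeq: "df z $ j = blinfun_apply (D1 z) (axis j 1)" if "z \<in> U" for z j
  proof -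
    have "blinfun_apply (D1 z) = (\<lambda>h. df z \<bullet> h)"
      using has_derivative_unique[OF d1[rule_format, OF that] f_grad[rule_format, of z]] .
    then show ?thesis by (simp add: inner_axis)
  qed
  have lin2: "linear (\<lambda>h. blinfun_apply (blinfun_apply (D2 z) h) (axis j 1))" for z j
  proof -
    have "bounded_linear (\<lambda>h. blinfun_apply (blinfun_apply (D2 z) h) (axis j 1))"
      by (intro bounded_linear_compose[OF blinfun.bounded_linear_left] blinfun.bounded_linear_right)
    then show ?thesis by (rule bounded_linear.linear)
  qed
  have der: "((\<lambda>z. df z $ j) has_derivative (\<lambda>h. H j z \<bullet> h)) (at z)" if "z \<in> U" for z j
  proof -
    have "((\<lambda>x. blinfun_apply (D1 x) (axis j 1)) has_derivative
          (\<lambda>h. blinfun_apply (D1 z) 0 + blinfun_apply (blinfun_apply (D2 z) h) (axis j 1))) (at z)"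
      by (rule blinfun.FDERIV[OF d2[rule_format, OF that] has_derivative_const])
    then have "((\<lambda>x. blinfun_apply (D1 x) (axis j 1)) has_derivative
          (\<lambda>h. blinfun_apply (blinfun_apply (D2 z) h) (axis j 1))) (at z)" by simp
    moreover have "(\<lambda>h. blinfun_apply (blinfun_apply (D2 z) h) (axis j 1)) = (\<lambda>h. H j z \<bullet> h)"
      unfolding H_def by (rule ext) (rule lin_inner[OF lin2])
    ultimately have "((\<lambda>x. blinfun_apply (D1 x) (axis j 1)) has_derivative (\<lambda>h. H j z \<bullet> h)) (at z)" by simp
    then show ?thesis
      by (rule has_derivative_transform_within_open[OF _ U(1) that]) (simp add: dfeq)
  qed
  have dH: "H j differentiable (at bh)" for j
  proof -
    have "(\<lambda>z. blinfun_apply (blinfun_apply (D2 z) (axis i 1)) (axis j 1)) differentiable (at bh)" for i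
    proof -
      have "((\<lambda>z. blinfun_apply (D2 z) (axis i 1)) has_derivative
             (\<lambda>h. blinfun_apply (D2 bh) 0 + blinfun_apply (blinfun_apply (D3 bh) h) (axis i 1))) (at bh)"
        by (rule blinfun.FDERIV[OF d3[rule_format, OF U(2)] has_derivative_const])
      from blinfun.FDERIV[OF this has_derivative_const, of "axis j 1"]
      show ?thesis unfolding differentiable_def by blast
    qed
    then show ?thesis unfolding H_def by (rule vec_lambda_differentiable)
  qed
  have C: "C2s (\<lambda>z. df z $ j) bh (H j)" for j
    unfolding C2s_def using eventually_nhds_in_open[OF U] der dH
    by (auto elim!: eventually_mono)
  have "(df has_derivative (\<lambda>h. \<chi> j. H j bh \<bullet> h)) (at bh)"
  proof -
    have "((\<lambda>z. \<chi> j. df z $ j) has_derivative (\<lambda>h. \<chi> j. H j bh \<bullet> h)) (at bh)"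
      by (rule vec_lambda_has_derivative) (rule der[OF U(2)])
    then show ?thesis by simp
  qed
  then have "frechet_derivative df (at bh) = (\<lambda>h. \<chi> j. H j bh \<bullet> h)"
    by (rule frechet_derivative_at[symmetric])
  then have "matrix (frechet_derivative df (at bh)) $ j $ i = H j bh $ i" for j i
    by (simp add: matrix_def inner_axis)
  then show ?thesis using C by blast
qed


lemma g_part:
  fixes g :: "real \<Rightarrow> ereal" and u0 :: real
  assumes "\<exists>U. open U \<and> u0 \<in> U \<and> (\<forall>x\<in>U. g x \<noteq> \<infinity>) \<and> C3_on U (\<lambda>x. real_of_ereal (g x))"
  shows "\<exists>U G1 G2. open U \<and> u0 \<in> U \<and> (\<forall>x\<in>U. g x \<noteq> \<infinity>) \<and>
     (\<forall>x\<in>U. DERIV (\<lambda>x. real_of_ereal (g x)) x :> G1 x) \<and> (\<forall>x\<in>U. DERIV G1 x :> G2 x) \<and>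
     G2 differentiable (at u0) \<and> deriv (deriv (\<lambda>x. real_of_ereal (g x))) u0 = G2 u0"
proof -
  obtain U D1 D2 D3 where U: "open U" "u0 \<in> U" "\<forall>x\<in>U. g x \<noteq> \<infinity>"
    and d1: "\<forall>x\<in>U. ((\<lambda>x. real_of_ereal (g x)) has_derivative blinfun_apply (D1 x)) (at x)"
    and d2: "\<forall>x\<in>U. (D1 has_derivative blinfun_apply (D2 x)) (at x)"
    and d3: "\<forall>x\<in>U. (D2 has_derivative blinfun_apply (D3 x)) (at x)"
    using assms unfolding C3_on_def by blast
  define G1 where "G1 x = blinfun_apply (D1 x) 1" for x
  define G2 where "G2 x = blinfun_apply (blinfun_apply (D2 x) 1) 1" for x
  have l1: "blinfun_apply (D1 x) = (\<lambda>h. G1 x * h)" for x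
  proof
    fix h :: real
    have "blinfun_apply (D1 x) h = blinfun_apply (D1 x) (h *\<^sub>R 1)" by simp
    also have "\<dots> = G1 x * h" unfolding blinfun.scaleR_right G1_def by simp
    finally show "blinfun_apply (D1 x) h = G1 x * h" .
  qed
  have G1: "DERIV (\<lambda>x. real_of_ereal (g x)) x :> G1 x" if "x \<in> U" for x
    using d1 that unfolding has_field_derivative_def l1 by (simp add: mult.commute)
  have G2: "DERIV G1 x :> G2 x" if "x \<in> U" for x
  proof -
    have "((\<lambda>x. blinfun_apply (D1 x) 1) has_derivative
          (\<lambda>h. blinfun_apply (D1 x) 0 + blinfun_apply (blinfun_apply (D2 x) h) 1)) (at x)"
      by (rule blinfun.FDERIV[OF d2[rule_format, OF that] has_derivative_const])
    moreover have "(\<lambda>h. blinfun_apply (D1 x) 0 + blinfun_apply (blinfun_apply (D2 x) h) 1) = (\<lambda>h. G2 x * h)"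
    proof
      fix h :: real
      have "blinfun_apply (blinfun_apply (D2 x) h) 1 = blinfun_apply (blinfun_apply (D2 x) (h *\<^sub>R 1)) 1" by simp
      also have "\<dots> = G2 x * h" unfolding blinfun.scaleR_right blinfun.scaleR_left G2_def by simp
      finally show "blinfun_apply (D1 x) 0 + blinfun_apply (blinfun_apply (D2 x) h) 1 = G2 x * h" by simp
    qed
    ultimately show ?thesis unfolding has_field_derivative_def G1_def[abs_def] by simp
  qed
  have dG2: "G2 differentiable (at u0)"
  proof -
    have "((\<lambda>z. blinfun_apply (D2 z) 1) has_derivative
           (\<lambda>h. blinfun_apply (D2 u0) 0 + blinfun_apply (blinfun_apply (D3 u0) h) 1)) (at u0)"
      by (rule blinfun.FDERIV[OF d3[rule_format, OF U(2)] has_derivative_const])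
    from blinfun.FDERIV[OF this has_derivative_const, of 1]
    show ?thesis unfolding differentiable_def G2_def[abs_def] by blast
  qed
  have "DERIV (deriv (\<lambda>x. real_of_ereal (g x))) u0 :> G2 u0"
    by (rule has_field_derivative_transform_within_open[OF G2[OF U(2)] U(1,2)])
       (simp add: DERIV_imp_deriv[OF G1])
  then have "deriv (deriv (\<lambda>x. real_of_ereal (g x))) u0 = G2 u0" by (rule DERIV_imp_deriv)
  then show ?thesis using U G1 G2 dG2 by blast
qed

lemma fsubdiff_deriv:
  fixes g :: "real \<Rightarrow> ereal"
  assumes U: "open U" "u0 \<in> U" "\<forall>x\<in>U. g x \<noteq> \<infinity>" and mi: "\<forall>x. g x \<noteq> -\<infinity>"
    and d: "DERIV (\<lambda>x. real_of_ereal (g x)) u0 :> d"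
  shows "d \<in> fsubdiff g u0"
proof -
  define G where "G x = real_of_ereal (g x)" for x
  have geq: "g x = ereal (G x)" if "x \<in> U" for x using U(3) mi that unfolding G_def by (cases "g x") auto
  have fin: "\<bar>g u0\<bar> \<noteq> \<infinity>" using geq[OF U(2)] by simp
  have H: "\<forall>e>0. \<exists>de>0. \<forall>x'. 0 < norm (x' - u0) \<and> norm (x' - u0) < de \<longrightarrow>
        norm (G x' - G u0 - d * (x' - u0)) / norm (x' - u0) < e"
    using d unfolding has_field_derivative_def has_derivative_at' G_def by blast
  obtain r where r: "r > 0" "ball u0 r \<subseteq> U" using U(1,2) open_contains_ball by blast
  have "\<exists>de>0. \<forall>y. dist y u0 < de \<longrightarrow> g u0 + ereal (d \<bullet> (y - u0) - e * norm (y - u0)) \<le> g y" if e: "e > 0" for e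
  proof -
    obtain de where de: "de > 0" "\<forall>x'. 0 < norm (x' - u0) \<and> norm (x' - u0) < de \<longrightarrow>
        norm (G x' - G u0 - d * (x' - u0)) / norm (x' - u0) < e" using H e by blast
    show ?thesis
    proof (intro exI[of _ "min de r"] conjI allI impI)
      show "min de r > 0" using de r by simp
      fix y assume y: "dist y u0 < min de r"
      then have yU: "y \<in> U" using r by (auto simp: dist_commute)
      show "g u0 + ereal (d \<bullet> (y - u0) - e * norm (y - u0)) \<le> g y"
      proof (cases "y = u0")
        case True then show ?thesis by simp
      next
        case False
        then have "norm (G y - G u0 - d * (y - u0)) / norm (y - u0) < e"
          using de(2) y by (auto simp: dist_norm)
        then have "\<bar>G y - G u0 - d * (y - u0)\<bar> < e * \<bar>y - u0\<bar>"
          using False by (simp add: divide_less_eq)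
        then have "G u0 + (d * (y - u0) - e * \<bar>y - u0\<bar>) \<le> G y" by linarith
        then show ?thesis using geq[OF yU] geq[OF U(2)] by simp
      qed
    qed
  qed
  then show ?thesis unfolding fsubdiff_def using fin by simp
qed

lemma sum_not_minf:
  fixes f :: "'a \<Rightarrow> ereal"
  shows "finite A \<Longrightarrow> (\<forall>i\<in>A. f i \<noteq> -\<infinity>) \<Longrightarrow> sum f A \<noteq> -\<infinity>"
  by (induction A rule: finite_induct) auto

lemma crit_coord:
  fixes g :: "'n::finite \<Rightarrow> real \<Rightarrow> ereal"
  assumes crit: "v \<in> fsubdiff (\<lambda>\<beta>. \<Sum>j\<in>UNIV. g j (\<beta> $ j)) bh" and mi: "\<forall>j x. g j x \<noteq> -\<infinity>"
  shows "v $ j \<in> fsubdiff (g j) (bh $ j)"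
proof -
  define h where "h \<beta> = (\<Sum>j\<in>UNIV. g j (\<beta> $ j))" for \<beta> :: "real^'n"
  define K where "K = (\<Sum>i\<in>UNIV - {j}. g i (bh $ i))"
  have hsplit: "h (vupd bh j t) = g j t + K" for t
  proof -
    have "h (vupd bh j t) = g j (vupd bh j t $ j) + (\<Sum>i\<in>UNIV - {j}. g i (vupd bh j t $ i))"
      unfolding h_def by (simp add: sum.remove[of UNIV j])
    also have "(\<Sum>i\<in>UNIV - {j}. g i (vupd bh j t $ i)) = K" unfolding K_def
      by (rule sum.cong) (auto simp: vupd_def)
    finally show ?thesis by (simp add: vupd_def)
  qed
  have hbh: "h bh = g j (bh $ j) + K"
  proof -
    have "vupd bh j (bh $ j) = bh" by (simp add: vupd_def vec_eq_iff)
    then show ?thesis using hsplit[of "bh $ j"] by simp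
  qed
  have crit': "\<bar>h bh\<bar> \<noteq> \<infinity>" and
    critH: "\<forall>e>0. \<exists>d>0. \<forall>y. dist y bh < d \<longrightarrow> h bh + ereal (v \<bullet> (y - bh) - e * norm (y - bh)) \<le> h y"
    using crit unfolding fsubdiff_def h_def[symmetric] by (auto split: if_splits)
  have Kmi: "K \<noteq> -\<infinity>" unfolding K_def by (rule sum_not_minf) (use mi in auto)
  have gmi: "g j (bh $ j) \<noteq> -\<infinity>" using mi by auto
  obtain a where a: "g j (bh $ j) = ereal a"
    using crit' hbh Kmi gmi by (cases "g j (bh $ j)"; cases K) auto
  obtain k where k: "K = ereal k"
    using crit' hbh Kmi gmi by (cases "g j (bh $ j)"; cases K) auto
  have "\<exists>d>0. \<forall>y. dist y (bh $ j) < d \<longrightarrow> g j (bh $ j) + ereal (v $ j \<bullet> (y - bh $ j) - e * norm (y - bh $ j)) \<le> g j y"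
    if e: "e > 0" for e
  proof -
    obtain d where d: "d > 0" "\<forall>y. dist y bh < d \<longrightarrow> h bh + ereal (v \<bullet> (y - bh) - e * norm (y - bh)) \<le> h y"
      using critH e by blast
    show ?thesis
    proof (intro exI[of _ d] conjI allI impI)
      show "d > 0" by (rule d(1))
      fix t assume t: "dist t (bh $ j) < d"
      have diff: "vupd bh j t - bh = (t - bh $ j) *\<^sub>R axis j 1"
        by (simp add: vupd_def vec_eq_iff axis_def)
      have nrm: "norm (vupd bh j t - bh) = \<bar>t - bh $ j\<bar>" unfolding diff by simp
      have inn: "v \<bullet> (vupd bh j t - bh) = v $ j * (t - bh $ j)" unfolding diff by (simp add: inner_axis)
      have "dist (vupd bh j t) bh < d" using t nrm by (simp add: dist_norm)
      then have "h bh + ereal (v \<bullet> (vupd bh j t - bh) - e * norm (vupd bh j t - bh)) \<le> h (vupd bh j t)"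
        using d(2) by blast
      then have "ereal a + ereal k + ereal (v $ j * (t - bh $ j) - e * \<bar>t - bh $ j\<bar>) \<le> g j t + ereal k"
        unfolding hbh hsplit nrm inn a k .
      then show "g j (bh $ j) + ereal (v $ j \<bullet> (t - bh $ j) - e * norm (t - bh $ j)) \<le> g j t"
        unfolding a using mi[rule_format, of j t] by (cases "g j t") auto
    qed
  qed
  then show ?thesis unfolding fsubdiff_def using a by simp
qed

lemma row_update_conj:
  fixes R M :: "real^'s^'s"
  assumes sym: "transpose R = R" and RR: "R ** R = M"
  shows "R ** (\<chi> a b. if a = s then (if a = b then 1 else 0) - c * M $ s $ b else (if a = b then 1 else 0))
       = (mat 1 - (\<chi> a b. R $ a $ s * c * R $ b $ s)) ** R"
proof -
  have Rs: "R $ k $ s = R $ s $ k" for k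
  proof -
    have "R $ k $ s = transpose R $ s $ k" by (simp add: transpose_def)
    then show ?thesis using sym by simp
  qed
  have Mv: "M $ s $ b = (\<Sum>k\<in>UNIV. R $ s $ k * R $ k $ b)" for b
    unfolding RR[symmetric] by (simp add: matrix_matrix_mult_def)
  have lhs: "(R ** (\<chi> a b. if a = s then (if a = b then 1 else 0) - c * M $ s $ b else (if a = b then 1 else 0))) $ a $ b
      = R $ a $ b - R $ a $ s * c * M $ s $ b" for a b
  proof -
    have "(\<Sum>k\<in>UNIV. R $ a $ k * (if k = s then (if k = b then 1 else 0) - c * M $ s $ b else (if k = b then 1 else 0)))
        = (\<Sum>k\<in>UNIV. (if k = b then R $ a $ k else 0) - (if k = s then R $ a $ k * c * M $ s $ b else 0))"
      by (rule sum.cong) (auto simp: algebra_simps)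
    also have "\<dots> = R $ a $ b - R $ a $ s * c * M $ s $ b" by (simp add: sum_subtractf)
    finally show ?thesis by (simp add: matrix_matrix_mult_def)
  qed
  have rhs: "((mat 1 - (\<chi> a b. R $ a $ s * c * R $ b $ s)) ** R) $ a $ b
      = R $ a $ b - R $ a $ s * c * M $ s $ b" for a b
  proof -
    have "(\<Sum>k\<in>UNIV. ((if a = k then 1 else 0) - R $ a $ s * c * R $ k $ s) * R $ k $ b)
        = (\<Sum>k\<in>UNIV. (if a = k then R $ k $ b else 0) - (R $ a $ s * c) * (R $ s $ k * R $ k $ b))"
      by (rule sum.cong) (auto simp: algebra_simps Rs)
    also have "\<dots> = R $ a $ b - R $ a $ s * c * M $ s $ b"
      by (simp add: sum_subtractf sum_distrib_left[symmetric] Mv)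
    finally show ?thesis by (simp add: matrix_matrix_mult_def mat_def)
  qed
  show ?thesis using lhs rhs by (simp add: vec_eq_iff)
qed

lemma matrix_inv_props:
  fixes R :: "real^'s^'s"
  assumes "invertible R"
  shows "R ** matrix_inv R = mat 1" "matrix_inv R ** R = mat 1"
proof -
  have "\<exists>A'. R ** A' = mat 1 \<and> A' ** R = mat 1" using assms unfolding invertible_def by blast
  then have "R ** matrix_inv R = mat 1 \<and> matrix_inv R ** R = mat 1"
    unfolding matrix_inv_def by (rule someI_ex)
  then show "R ** matrix_inv R = mat 1" "matrix_inv R ** R = mat 1" by auto
qed

lemma fold_conj:
  fixes R :: "real^'s^'s"
  assumes inv: "invertible R" and H: "\<forall>s\<in>set xs. R ** J s = Bm s ** R"
  shows "fold (\<lambda>s A. J s ** A) xs (matrix_inv R ** X ** R) = matrix_inv R ** fold (\<lambda>s A. Bm s ** A) xs X ** R"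
  using H
proof (induction xs arbitrary: X)
  case Nil then show ?case by simp
next
  case (Cons a xs)
  note mi = matrix_inv_props[OF inv]
  have Ja: "J a = matrix_inv R ** Bm a ** R"
  proof -
    have "J a = matrix_inv R ** (R ** J a)" using mi(2) by (simp add: matrix_mul_assoc)
    also have "\<dots> = matrix_inv R ** Bm a ** R" using Cons.prems by (simp add: matrix_mul_assoc)
    finally show ?thesis .
  qed
  have "J a ** (matrix_inv R ** X ** R) = matrix_inv R ** (Bm a ** X) ** R"
  proof -
    have "J a ** (matrix_inv R ** X ** R) = matrix_inv R ** Bm a ** (R ** matrix_inv R) ** X ** R"
      unfolding Ja by (simp add: matrix_mul_assoc)
    also have "\<dots> = matrix_inv R ** (Bm a ** X) ** R" using mi(1) by (simp add: matrix_mul_assoc)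
    finally show ?thesis .
  qed
  then show ?case using Cons by simp
qed

theorem lemma1:
  fixes f :: "(real, 'n::{finite,linorder}) vec \<Rightarrow> real"
    and df :: "(real, 'n) vec \<Rightarrow> (real, 'n) vec"
    and g :: "'n \<Rightarrow> real \<Rightarrow> ereal"
    and L :: "'n \<Rightarrow> real"
    and \<beta>0 \<beta>h :: "(real, 'n) vec"
    and js :: "'s::{finite,linorder} \<Rightarrow> 'n"
  assumes f_convex: "convex_on UNIV f"
    and f_grad: "\<forall>x. (f has_derivative (\<lambda>h. df x \<bullet> h)) (at x)"
    and L_pos: "\<forall>j. 0 < L j"
    and coord_lip: "\<forall>x j h. \<bar>df (x + h *\<^sub>R axis j 1) $ j - df x $ j\<bar> \<le> L j * \<bar>h\<bar>"
    and g_proper: "\<forall>j. proper_fn (g j)"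
    and g_closed: "\<forall>j. lsc_fn (g j)"
    and g_lb: "\<forall>j. lower_bounded_fn (g j)"
    and g_weak: "\<exists>\<alpha><1. \<forall>j. ereal_convex (\<lambda>x. ereal (1 / L j) * g j x + ereal (\<alpha> / 2 * x\<^sup>2))"
    and cd_conv: "(\<lambda>k. (cd_epoch df g L ^^ k) \<beta>0) \<longlonglongrightarrow> \<beta>h"
    and critical: "- df \<beta>h \<in> fsubdiff (\<lambda>\<beta>. \<Sum>j\<in>UNIV. g j (\<beta> $ j)) \<beta>h"
    and js_enum: "strict_mono js" "range js = gsupp g \<beta>h"
    and nondeg: "\<forall>j. j \<notin> gsupp g \<beta>h \<longrightarrow> - (df \<beta>h $ j) \<in> interior (fsubdiff (g j) (\<beta>h $ j))"
    and f_C3: "\<exists>U. open U \<and> \<beta>h \<in> U \<and> C3_on U f"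
    and g_C3: "\<forall>j\<in>gsupp g \<beta>h. \<exists>U. open U \<and> \<beta>h $ j \<in> U \<and> (\<forall>x\<in>U. g j x \<noteq> \<infinity>)
                 \<and> C3_on U (\<lambda>x. real_of_ereal (g j x))"
    and M_pd: "pos_def_mat (\<chi> s t. matrix (frechet_derivative df (at \<beta>h)) $ js s $ js t
                 + (if s = t then deriv (deriv (\<lambda>x. real_of_ereal (g (js s) x))) (\<beta>h $ js s) else 0))"
  shows "let \<gamma> = (\<lambda>j. 1 / L j);
             g2 = (\<lambda>j. deriv (deriv (\<lambda>x. real_of_ereal (g j x))) (\<beta>h $ j));
             M = (\<chi> s t. matrix (frechet_derivative df (at \<beta>h)) $ js s $ js t
                   + (if s = t then g2 (js s) else 0)) :: ((real, 's) vec, 's) vec;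
             R = mat_sqrt M;
             B = (\<lambda>s. (\<chi> a b. R $ a $ s * (\<gamma> (js s) / (1 + \<gamma> (js s) * g2 (js s))) * R $ b $ s) :: ((real, 's) vec, 's) vec);
             \<psi> = psi_map df g \<gamma> js \<beta>h;
             \<beta>S = (\<chi> s. \<beta>h $ js s) :: (real, 's) vec
         in twice_differentiable_at \<psi> \<beta>S \<and>
            matrix (frechet_derivative \<psi> (at \<beta>S)) =
              matrix_inv R ** fold (\<lambda>s A. (mat 1 - B s) ** A) (sorted_list_of_set (UNIV :: 's set)) (mat 1) ** R"
proof -
  obtain alpha where alpha: "alpha < 1"
    and conv: "\<forall>j. ereal_convex (\<lambda>x. ereal (1 / L j) * g j x + ereal (alpha / 2 * x\<^sup>2))"
    using g_weak by blast
  have mi: "\<forall>j x. g j x \<noteq> -\<infinity>" using g_proper unfolding proper_fn_def by blast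
  have wcj: "wc (g j) (1 / L j) alpha" for j
    unfolding wc_def using L_pos alpha mi conv by auto
  define S where "S = gsupp g \<beta>h"
  have gex: "\<forall>j\<in>S. \<exists>U G1 G2. open U \<and> \<beta>h $ j \<in> U \<and> (\<forall>x\<in>U. g j x \<noteq> \<infinity>) \<and>
     (\<forall>x\<in>U. DERIV (\<lambda>x. real_of_ereal (g j x)) x :> G1 x) \<and> (\<forall>x\<in>U. DERIV G1 x :> G2 x) \<and>
     G2 differentiable (at (\<beta>h $ j)) \<and> deriv (deriv (\<lambda>x. real_of_ereal (g j x))) (\<beta>h $ j) = G2 (\<beta>h $ j)"
  proof
    fix j assume "j \<in> S"
    then show "\<exists>U G1 G2. open U \<and> \<beta>h $ j \<in> U \<and> (\<forall>x\<in>U. g j x \<noteq> \<infinity>) \<and>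
     (\<forall>x\<in>U. DERIV (\<lambda>x. real_of_ereal (g j x)) x :> G1 x) \<and> (\<forall>x\<in>U. DERIV G1 x :> G2 x) \<and>
     G2 differentiable (at (\<beta>h $ j)) \<and> deriv (deriv (\<lambda>x. real_of_ereal (g j x))) (\<beta>h $ j) = G2 (\<beta>h $ j)"
      using g_C3 unfolding S_def by (intro g_part) blast
  qed
  then have "\<exists>UU. \<forall>j\<in>S. \<exists>G1 G2. open (UU j) \<and> \<beta>h $ j \<in> UU j \<and> (\<forall>x\<in>UU j. g j x \<noteq> \<infinity>) \<and>
     (\<forall>x\<in>UU j. DERIV (\<lambda>x. real_of_ereal (g j x)) x :> G1 x) \<and> (\<forall>x\<in>UU j. DERIV G1 x :> G2 x) \<and>
     G2 differentiable (at (\<beta>h $ j)) \<and> deriv (deriv (\<lambda>x. real_of_ereal (g j x))) (\<beta>h $ j) = G2 (\<beta>h $ j)"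
    by (rule bchoice)
  then obtain UU where "\<forall>j\<in>S. \<exists>G1 G2. open (UU j) \<and> \<beta>h $ j \<in> UU j \<and> (\<forall>x\<in>UU j. g j x \<noteq> \<infinity>) \<and>
     (\<forall>x\<in>UU j. DERIV (\<lambda>x. real_of_ereal (g j x)) x :> G1 x) \<and> (\<forall>x\<in>UU j. DERIV G1 x :> G2 x) \<and>
     G2 differentiable (at (\<beta>h $ j)) \<and> deriv (deriv (\<lambda>x. real_of_ereal (g j x))) (\<beta>h $ j) = G2 (\<beta>h $ j)"
    by blast
  then have "\<exists>GG1. \<forall>j\<in>S. \<exists>G2. open (UU j) \<and> \<beta>h $ j \<in> UU j \<and> (\<forall>x\<in>UU j. g j x \<noteq> \<infinity>) \<and>
     (\<forall>x\<in>UU j. DERIV (\<lambda>x. real_of_ereal (g j x)) x :> GG1 j x) \<and> (\<forall>x\<in>UU j. DERIV (GG1 j) x :> G2 x) \<and>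
     G2 differentiable (at (\<beta>h $ j)) \<and> deriv (deriv (\<lambda>x. real_of_ereal (g j x))) (\<beta>h $ j) = G2 (\<beta>h $ j)"
    by (rule bchoice)
  then obtain GG1 where "\<forall>j\<in>S. \<exists>G2. open (UU j) \<and> \<beta>h $ j \<in> UU j \<and> (\<forall>x\<in>UU j. g j x \<noteq> \<infinity>) \<and>
     (\<forall>x\<in>UU j. DERIV (\<lambda>x. real_of_ereal (g j x)) x :> GG1 j x) \<and> (\<forall>x\<in>UU j. DERIV (GG1 j) x :> G2 x) \<and>
     G2 differentiable (at (\<beta>h $ j)) \<and> deriv (deriv (\<lambda>x. real_of_ereal (g j x))) (\<beta>h $ j) = G2 (\<beta>h $ j)"
    by blast
  then have "\<exists>GG2. \<forall>j\<in>S. open (UU j) \<and> \<beta>h $ j \<in> UU j \<and> (\<forall>x\<in>UU j. g j x \<noteq> \<infinity>) \<and>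
     (\<forall>x\<in>UU j. DERIV (\<lambda>x. real_of_ereal (g j x)) x :> GG1 j x) \<and> (\<forall>x\<in>UU j. DERIV (GG1 j) x :> GG2 j x) \<and>
     GG2 j differentiable (at (\<beta>h $ j)) \<and> deriv (deriv (\<lambda>x. real_of_ereal (g j x))) (\<beta>h $ j) = GG2 j (\<beta>h $ j)"
    by (rule bchoice)
  then obtain GG2 where gg: "\<forall>j\<in>S. open (UU j) \<and> \<beta>h $ j \<in> UU j \<and> (\<forall>x\<in>UU j. g j x \<noteq> \<infinity>) \<and>
     (\<forall>x\<in>UU j. DERIV (\<lambda>x. real_of_ereal (g j x)) x :> GG1 j x) \<and> (\<forall>x\<in>UU j. DERIV (GG1 j) x :> GG2 j x) \<and>
     GG2 j differentiable (at (\<beta>h $ j)) \<and> deriv (deriv (\<lambda>x. real_of_ereal (g j x))) (\<beta>h $ j) = GG2 j (\<beta>h $ j)"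
    by blast
  have dfG: "- (df \<beta>h $ j) = GG1 j (\<beta>h $ j)" if jS: "j \<in> S" for j
  proof -
    have A: "(- df \<beta>h) $ j \<in> fsubdiff (g j) (\<beta>h $ j)" by (rule crit_coord[OF critical mi])
    have B: "GG1 j (\<beta>h $ j) \<in> fsubdiff (g j) (\<beta>h $ j)"
      using gg jS mi by (intro fsubdiff_deriv[of "UU j"]) auto
    obtain v where "fsubdiff (g j) (\<beta>h $ j) = {v}" using jS unfolding S_def gsupp_def by blast
    then show ?thesis using A B by simp
  qed
  obtain H where HC: "\<forall>j. C2s (\<lambda>z. df z $ j) \<beta>h (H j)"
    and Hm: "\<forall>j i. matrix (frechet_derivative df (at \<beta>h)) $ j $ i = H j \<beta>h $ i"
    using f_part[OF f_grad f_C3] by blast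
  have injjs: "inj js"
  proof (rule injI)
    fix a b assume "js a = js b"
    then show "a = b" using js_enum(1) unfolding strict_mono_def by (metis linorder_neqE less_irrefl)
  qed
  define E :: "((real, 's) vec, 'n) vec" where "E = (\<chi> i t. if i = js t then 1 else 0)"
  define c :: "(real, 'n) vec" where "c = (\<chi> i. if i \<in> range js then 0 else \<beta>h $ i)"
  have Ev: "(E *v u) $ i = (if i \<in> range js then u $ inv js i else 0)" for u i
  proof (cases "i \<in> range js")
    case True
    then obtain t0 where t0: "i = js t0" by blast
    have "(E *v u) $ i = (\<Sum>t\<in>UNIV. (if t0 = t then 1 else 0) * u $ t)"
      unfolding E_def matrix_vector_mult_def using injjs t0 by (simp add: inj_eq)
    also have "\<dots> = (\<Sum>t\<in>UNIV. (if t0 = t then u $ t else 0))"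
      by (rule sum.cong) auto
    also have "\<dots> = u $ t0" by simp
    finally show ?thesis using True t0 injjs by simp
  next
    case False
    then have "\<And>t. i \<noteq> js t" by blast
    then show ?thesis using False unfolding E_def matrix_vector_mult_def by simp
  qed
  have embE: "emb js \<beta>h u = E *v u + c" for u
    by (simp add: emb_def vec_eq_iff Ev c_def)
  define \<beta>S :: "(real, 's) vec" where "\<beta>S = (\<chi> s. \<beta>h $ js s)"
  have EbS: "E *v \<beta>S + c = \<beta>h"
    by (simp add: vec_eq_iff Ev c_def \<beta>S_def f_inv_into_f)
  have ETv: "(transpose E *v w) $ t = w $ js t" for w t
  proof -
    have "(transpose E *v w) $ t = (\<Sum>i\<in>UNIV. (if i = js t then 1 else 0) * w $ i)"
      unfolding E_def matrix_vector_mult_def transpose_def by simp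
    also have "\<dots> = (\<Sum>i\<in>UNIV. (if i = js t then w $ i else 0))"
      by (rule sum.cong) auto
    finally have "(transpose E *v w) $ t = (\<Sum>i\<in>UNIV. (if i = js t then w $ i else 0))" .
    then show ?thesis by simp
  qed
  define g2 where "g2 j = deriv (deriv (\<lambda>x. real_of_ereal (g j x))) (\<beta>h $ j)" for j
  define Mm :: "((real, 's) vec, 's) vec" where "Mm = (\<chi> s t. matrix (frechet_derivative df (at \<beta>h)) $ js s $ js t
                   + (if s = t then g2 (js s) else 0))"
  define cc where "cc s = (1 / L (js s)) / (1 + (1 / L (js s)) * g2 (js s))" for s
  define p where "p j = prox (\<lambda>v. ereal (1 / L j) * g j v)" for j
  define p' where "p' j z = inverse (1 + 1 / L j * GG2 j (p j z))" for j z
  define l where "l s u = u $ s - 1 / L (js s) * (df (E *v u + c) $ js s)" for s u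
  define Gl where "Gl s y = axis s 1 - (1 / L (js s)) *\<^sub>R (transpose E *v H (js s) (E *v y + c))" for s y
  define Jf where "Jf s y = Jv s (p' (js s) (l s y) *\<^sub>R Gl s y)" for s y
  have per_s: "C2 (Pmap df g (\<lambda>j. 1 / L j) js \<beta>h s) \<beta>S (Jf s) \<and> Pmap df g (\<lambda>j. 1 / L j) js \<beta>h s \<beta>S = \<beta>S \<and>
     Jf s \<beta>S = (\<chi> a b. if a = s then (if a = b then 1 else 0) - cc s * Mm $ s $ b else (if a = b then 1 else 0))" for s
  proof -
    define j where "j = js s"
    have jS: "j \<in> S" unfolding j_def S_def using js_enum(2) by blast
    interpret W: wc "g j" "1 / L j" alpha by (rule wcj)
    have Uo: "open (UU j)" and Umem: "\<beta>h $ j \<in> UU j" and Ufin: "\<forall>x\<in>UU j. g j x \<noteq> \<infinity>"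
      and G1d: "\<forall>x\<in>UU j. DERIV (\<lambda>x. real_of_ereal (g j x)) x :> GG1 j x"
      and G2d: "\<forall>x\<in>UU j. DERIV (GG1 j) x :> GG2 j x"
      and G2diff: "GG2 j differentiable (at (\<beta>h $ j))"
      and g2eq: "g2 j = GG2 j (\<beta>h $ j)"
      using gg jS unfolding g2_def by auto
    have Geq: "W.G = (\<lambda>x. real_of_ereal (g j x))" by (rule ext) (simp add: W.G_def)
    have Usub: "UU j \<subseteq> W.dm" using Ufin unfolding W.dm_def by auto
    have G1d': "\<forall>x\<in>UU j. DERIV W.G x :> GG1 j x" using G1d Geq by simp
    define u0 where "u0 = \<beta>h $ j"
    define z0 where "z0 = u0 + 1 / L j * GG1 j u0"
    obtain a b where ab: "a < z0" "z0 < b"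
      and abH: "\<forall>z\<in>{a<..<b}. p j z \<in> UU j \<and> DERIV (p j) z :> p' j z"
      using W.prox_local[OF Uo Usub Umem G1d' G2d] unfolding p_def p'_def z0_def u0_def by blast
    have pz0: "p j z0 = u0"
      using W.prox_char[OF Uo Usub Umem] G1d' Umem unfolding p_def z0_def u0_def by blast
    have lpos: "1 + 1 / L j * GG2 j u0 > 0"
      using W.qderiv_lower[OF Uo Usub Umem G1d' G2d] alpha unfolding u0_def by linarith
    have e: "df \<beta>h $ js s = - GG1 (js s) (\<beta>h $ js s)"
      using dfG[OF jS] unfolding j_def by (simp add: minus_equation_iff)
    have lz0: "l s \<beta>S = z0"
      unfolding l_def z0_def EbS u0_def j_def by (simp add: \<beta>S_def e)
    have dp': "p' j differentiable (at z0)"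
    proof -
      have "DERIV (p j) z0 :> p' j z0" using abH ab by auto
      then have dp: "p j differentiable (at z0)" unfolding has_field_derivative_def differentiable_def by blast
      have "GG2 j differentiable (at (p j z0))" using G2diff pz0 unfolding u0_def by simp
      from differentiable_chain_at[OF dp this]
      have "(\<lambda>z. GG2 j (p j z)) differentiable (at z0)" by (simp add: o_def)
      then have "(\<lambda>z. 1 + 1 / L j * GG2 j (p j z)) differentiable (at z0)"
        by (intro differentiable_add differentiable_mult differentiable_const)
      moreover have "1 + 1 / L j * GG2 j (p j z0) \<noteq> 0" using lpos pz0 by simp
      ultimately show ?thesis unfolding p'_def[abs_def] by (rule differentiable_inverse)
    qed
    have c2: "C2s (\<lambda>u. df (E *v u + c) $ j) \<beta>S (\<lambda>y. transpose E *v H j (E *v y + c))"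
      by (rule C2s_affine) (use HC EbS in simp)
    have Cl: "C2s (l s) \<beta>S (Gl s)"
      using C2s_lin[OF C2s_nth c2, of s "1 / L j"] unfolding l_def[abs_def] Gl_def[abs_def] j_def .
    have evD: "\<forall>\<^sub>F z in nhds (l s \<beta>S). DERIV (p j) z :> p' j z"
    proof -
      have "\<forall>\<^sub>F z in nhds z0. z \<in> {a<..<b}" using ab by (intro eventually_nhds_in_open) auto
      then show ?thesis unfolding lz0 by (rule eventually_mono) (use abH in auto)
    qed
    have Cphi: "C2s (\<lambda>y. p j (l s y)) \<beta>S (\<lambda>y. p' j (l s y) *\<^sub>R Gl s y)"
      by (rule C2s_comp_real[OF Cl evD]) (use dp' lz0 in simp)
    have CP: "C2 (\<lambda>u. vupd u s (p j (l s u))) \<beta>S (Jf s)"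
      using C2s_vupd[OF Cphi, of s] unfolding Jf_def[abs_def] j_def .
    have Peq: "Pmap df g (\<lambda>j. 1 / L j) js \<beta>h s = (\<lambda>u. vupd u s (p j (l s u)))"
      by (rule ext) (simp add: Pmap_def embE p_def l_def j_def)
    have fixp: "Pmap df g (\<lambda>j. 1 / L j) js \<beta>h s \<beta>S = \<beta>S"
      unfolding Peq lz0 pz0 by (simp add: vupd_def vec_eq_iff \<beta>S_def u0_def j_def)
    have Jval: "Jf s \<beta>S = (\<chi> a b. if a = s then (if a = b then 1 else 0) - cc s * Mm $ s $ b else (if a = b then 1 else 0))"
    proof -
      have p'0: "p' j (l s \<beta>S) = inverse (1 + 1 / L j * g2 j)"
        unfolding lz0 p'_def pz0 g2eq u0_def ..
      have Glv: "Gl s \<beta>S $ b = (if b = s then 1 else 0) - 1 / L j * H j \<beta>h $ js b" for b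
        unfolding Gl_def EbS vector_minus_component vector_scaleR_component ETv j_def by (simp add: axis_def)
      have Mv: "Mm $ s $ b = H j \<beta>h $ js b + (if s = b then g2 j else 0)" for b
        unfolding Mm_def j_def using Hm by simp
      have ent: "inverse (1 + 1 / L j * g2 j) * ((if b = s then 1 else 0) - 1 / L j * H j \<beta>h $ js b)
           = (if s = b then 1 else 0) - cc s * (H j \<beta>h $ js b + (if s = b then g2 j else 0))" for b
      proof -
        have nz: "1 + 1 / L j * g2 j \<noteq> 0" using lpos g2eq unfolding u0_def by simp
        have aux1: "inverse (1 + ga * gg) * (1 - ga * hh) = 1 - ga / (1 + ga * gg) * (hh + gg)"
          if "1 + ga * gg \<noteq> 0" for ga gg hh :: real
        proof -
          have "1 - ga / (1 + ga * gg) * (hh + gg) = ((1 + ga * gg) - ga * (hh + gg)) / (1 + ga * gg)"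
            using that by (simp add: field_simps)
          also have "\<dots> = (1 - ga * hh) / (1 + ga * gg)" by (simp add: algebra_simps)
          finally show ?thesis by (simp add: divide_inverse mult.commute)
        qed
        have aux2: "inverse (1 + ga * gg) * (0 - ga * hh) = 0 - ga / (1 + ga * gg) * (hh + 0)"
          for ga gg hh :: real
          by (simp add: divide_inverse)
        show ?thesis unfolding cc_def j_def[symmetric]
          using aux1[OF nz, of "H j \<beta>h $ js b"] aux2[of "1 / L j" "g2 j" "H j \<beta>h $ js b"]
          by (cases "b = s") auto
      qed
      have Xb: "(p' (js s) (l s \<beta>S) *\<^sub>R Gl s \<beta>S) $ b = (if s = b then 1 else 0) - cc s * Mm $ s $ b" for b
        unfolding vector_scaleR_component Glv Mv j_def[symmetric] p'0 real_scaleR_def by (rule ent)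
      show ?thesis unfolding Jf_def Jv_def Xb by (simp add: vec_eq_iff)
    qed
    show ?thesis using CP Peq fixp Jval by simp
  qed
  define xs where "xs = sorted_list_of_set (UNIV :: 's set)"
  define P where "P = Pmap df g (\<lambda>j. 1 / L j) js \<beta>h"
  have allP: "\<forall>s\<in>set xs. C2 (P s) \<beta>S (Jf s) \<and> P s \<beta>S = \<beta>S" using per_s unfolding P_def by blast
  from C2_fold[OF allP] obtain J' where J': "C2 (fold P xs) \<beta>S J'"
    "\<forall>A::((real, 's) vec, 's) vec. J' \<beta>S ** A = fold (\<lambda>s A. Jf s \<beta>S ** A) xs A" by blast
  have psi_eq: "psi_map df g (\<lambda>j. 1 / L j) js \<beta>h = fold P xs"
    by (rule ext) (simp add: psi_map_def P_def xs_def)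
  have tw: "twice_differentiable_at (psi_map df g (\<lambda>j. 1 / L j) js \<beta>h) \<beta>S \<and>
      matrix (frechet_derivative (psi_map df g (\<lambda>j. 1 / L j) js \<beta>h) (at \<beta>S)) = J' \<beta>S"
    unfolding psi_eq by (rule C2_twice[OF J'(1)])
  have J'v: "J' \<beta>S = fold (\<lambda>s A. Jf s \<beta>S ** A) xs (mat 1)"
    using J'(2)[rule_format, of "mat 1"] by simp
  define R where "R = mat_sqrt Mm"
  have Mpd: "pos_def_mat Mm" using M_pd unfolding Mm_def g2_def .
  have Rp: "transpose R = R" "R ** R = Mm" "invertible R"
    using mat_sqrt_props[OF Mpd] unfolding R_def by auto
  define B where "B s = (\<chi> a b. R $ a $ s * ((1 / L (js s)) / (1 + (1 / L (js s)) * g2 (js s))) * R $ b $ s)" for s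
  have conjs: "\<forall>s\<in>set xs. R ** Jf s \<beta>S = (mat 1 - B s) ** R"
  proof
    fix s
    have "R ** Jf s \<beta>S = (mat 1 - (\<chi> a b. R $ a $ s * cc s * R $ b $ s)) ** R"
      using per_s[of s] row_update_conj[OF Rp(1,2), of s "cc s"] by simp
    then show "R ** Jf s \<beta>S = (mat 1 - B s) ** R" unfolding B_def cc_def .
  qed
  have "fold (\<lambda>s A. Jf s \<beta>S ** A) xs (matrix_inv R ** mat 1 ** R) = matrix_inv R ** fold (\<lambda>s A. (mat 1 - B s) ** A) xs (mat 1) ** R"
    by (rule fold_conj[OF Rp(3) conjs])
  moreover have "matrix_inv R ** mat 1 ** R = mat 1" using matrix_inv_props(2)[OF Rp(3)] by simp
  ultimately have final: "matrix (frechet_derivative (psi_map df g (\<lambda>j. 1 / L j) js \<beta>h) (at \<beta>S))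
      = matrix_inv R ** fold (\<lambda>s A. (mat 1 - B s) ** A) xs (mat 1) ** R"
    using tw J'v by simp
  show ?thesis
    unfolding Let_def
    using tw final unfolding R_def Mm_def B_def g2_def xs_def \<beta>S_def by simp
qed

end
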